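(* Assume Case 3 holds. Let $(C,D)=(n_2,m_2)$ and for $n\ge1$ put $$(C_n,D_n)=(\gamma_n-(\gamma-C)d^{n-1},\ Dd^{n-1}),\qquad (C_n^*,D_n^* )=\big((\delta^{n-1}+\delta^{n-2}D+\cdots+\delta D^{n-2}+D^{n-1})C,\ D^n\big).$$ (i) If $\delta>T_1$, then for every $n\ge1$, $(C_n,D_n)$ is the vertex of $N(Q^n)$ immediately following $(\gamma_n,d^n)$ (in order of increasing $x$-coordinate), the segment joining them has slope $-l_2^{-1}$, and $\delta^n$ is strictly bigger than the $y$-intercept of the line through $(\gamma_n,d^n)$ and $(C_n,D_n)$. (ii) If $\delta=T_1$ and $m_2>0$, then for every $n\ge1$, $(C_n^*,D_n^* )$ is the vertex of $N(Q^n)$ immediately following $(\gamma_n,d^n)$, the segment joining them has slope $-l_2^{-1}$, and $\delta^n$ equals the $y$-intercept of the line through $(\gamma_n,d^n)$ and $(C_n^*,D_n^* )$.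
   Context: Let $f(z,w)=(p(z),q(z,w))$ be a holomorphic skew product germ at the origin of $\mathbb{C}^2$ with $f(0,0)=(0,0)$, where $p(z)=a_\delta z^\delta+O(z^{\delta+1})$ with $a_\delta\neq0$ and integer $\delta\ge1$, and $q(z,w)=\sum_{i+j\ge1}b_{ij}z^iw^j$ is not identically zero. For $n\ge1$ write $f^n=(p^n,Q^n)$. The Newton polygon $N(g)$ of a nonzero germ $g=\sum g_{ij}z^iw^j$ is the convex hull of $\bigcup_{g_{ij}\neq0}\{(x,y):x\ge i,\ y\ge j\}$. Let $(n_1,m_1),\dots,(n_s,m_s)$ be the vertices of $N(q)$ with $n_1<\cdots<n_s$, $m_1>\cdots>m_s$; for $1\le k\le s-1$ let $T_k$ be the $y$-intercept of the line through $(n_k,m_k)$ and $(n_{k+1},m_{k+1})$. Case 3 means: $s>1$ and $T_1\le\delta$; set $(\gamma,d)=(n_1,m_1)$ and $l_2=\frac{n_2-n_1}{m_1-m_2}$. Define $\gamma_n=\gamma(\delta^{n-1}+\delta^{n-2}d+\cdots+d^{n-1})$. *)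

theory Defs
  imports "HOL-Analysis.Analysis"
begin

definition has_expansion2 :: "(complex \<Rightarrow> complex \<Rightarrow> complex) \<Rightarrow> (nat \<Rightarrow> nat \<Rightarrow> complex) \<Rightarrow> bool" where
  "has_expansion2 g c \<longleftrightarrow> (\<exists>r>0. \<forall>z w. norm z < r \<and> norm w < r \<longrightarrow>
      ((\<lambda>(i,j). c i j * z ^ i * w ^ j) has_sum g z w) UNIV)"

definition has_expansion1 :: "(complex \<Rightarrow> complex) \<Rightarrow> (nat \<Rightarrow> complex) \<Rightarrow> bool" where
  "has_expansion1 g a \<longleftrightarrow> (\<exists>r>0. \<forall>z. norm z < r \<longrightarrow> (\<lambda>i. a i * z ^ i) sums g z)"

definition coeffs2 :: "(complex \<Rightarrow> complex \<Rightarrow> complex) \<Rightarrow> nat \<Rightarrow> nat \<Rightarrow> complex" where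
  "coeffs2 g = (THE c. has_expansion2 g c)"

text \<open>Second component of the iterate f^n = (p^n, Q^n) of the skew product f = (p,q).\<close>
fun Qit :: "(complex \<Rightarrow> complex) \<Rightarrow> (complex \<Rightarrow> complex \<Rightarrow> complex) \<Rightarrow> nat \<Rightarrow> complex \<Rightarrow> complex \<Rightarrow> complex" where
  "Qit p q 0 = (\<lambda>z w. w)"
| "Qit p q (Suc n) = (\<lambda>z w. q ((p ^^ n) z) (Qit p q n z w))"

definition newton_polygon :: "(nat \<Rightarrow> nat \<Rightarrow> complex) \<Rightarrow> (real \<times> real) set" where
  "newton_polygon c = convex hull (\<Union>{ {(x,y). x \<ge> real i \<and> y \<ge> real j} | i j. c i j \<noteq> 0})"

definition is_vertex :: "(nat \<Rightarrow> nat \<Rightarrow> complex) \<Rightarrow> real \<times> real \<Rightarrow> bool" where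
  "is_vertex c P \<longleftrightarrow> P extreme_point_of newton_polygon c"

definition next_vertex :: "(nat \<Rightarrow> nat \<Rightarrow> complex) \<Rightarrow> real \<times> real \<Rightarrow> real \<times> real \<Rightarrow> bool" where
  "next_vertex c P Q \<longleftrightarrow> is_vertex c P \<and> is_vertex c Q \<and> fst P < fst Q \<and>
      (\<forall>R. is_vertex c R \<and> fst P < fst R \<longrightarrow> fst Q \<le> fst R)"

definition slope :: "real \<times> real \<Rightarrow> real \<times> real \<Rightarrow> real" where
  "slope P Q = (snd Q - snd P) / (fst Q - fst P)"

definition yint :: "real \<times> real \<Rightarrow> real \<times> real \<Rightarrow> real" where
  "yint P Q = snd P - fst P * slope P Q"

end

theory Submission
  imports Defs
begin


definition tm :: "(nat \<Rightarrow> nat \<Rightarrow> 'a::real_normed_field) \<Rightarrow> 'a \<Rightarrow> 'a \<Rightarrow> nat \<times> nat \<Rightarrow> 'a" where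
  "tm c z w = (\<lambda>(i,j). c i j * z ^ i * w ^ j)"

definition cmul :: "(nat \<Rightarrow> nat \<Rightarrow> 'a::comm_semiring_1) \<Rightarrow> (nat \<Rightarrow> nat \<Rightarrow> 'a) \<Rightarrow> nat \<Rightarrow> nat \<Rightarrow> 'a" where
  "cmul c e k l = (\<Sum>(i,j)\<in>{..k}\<times>{..l}. c i j * e (k-i) (l-j))"

lemma product_sum:
  fixes x :: "'b \<Rightarrow> 'a::{real_normed_field,banach}" and y :: "'c \<Rightarrow> 'a"
  assumes x: "x abs_summable_on A" and y: "y abs_summable_on B"
  shows "(\<lambda>(a,b). x a * y b) abs_summable_on A \<times> B"
    "infsum (\<lambda>(a,b). x a * y b) (A \<times> B) = infsum x A * infsum y B"
proof -
  have 1: "((\<lambda>(a,b). norm (x a * y b)) summable_on A \<times> B)"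
  proof (rule summable_on_SigmaI[where g="\<lambda>a. norm (x a) * infsum (\<lambda>b. norm (y b)) B"])
    fix a assume "a \<in> A"
    show "((\<lambda>b. case (a, b) of (a, b) \<Rightarrow> norm (x a * y b)) has_sum norm (x a) * infsum (\<lambda>b. norm (y b)) B) B"
      using has_sum_cmult_right[OF has_sum_infsum[OF y], of "norm (x a)"] by (simp add: norm_mult)
  next
    show "(\<lambda>a. norm (x a) * infsum (\<lambda>b. norm (y b)) B) summable_on A"
      using summable_on_cmult_left[OF x] by blast
  qed auto
  then show 2: "(\<lambda>(a,b). x a * y b) abs_summable_on A \<times> B"
    by (simp add: case_prod_unfold)
  have s: "(\<lambda>(a,b). x a * y b) summable_on A \<times> B"
    using abs_summable_summable[OF 2] .
  have "infsum (\<lambda>(a,b). x a * y b) (A \<times> B) = infsum (\<lambda>a. infsum (\<lambda>b. x a * y b) B) A"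
    using infsum_Sigma_banach[OF s] by simp
  also have "\<dots> = infsum (\<lambda>a. x a * infsum y B) A"
    by (simp add: infsum_cmult_right')
  also have "\<dots> = infsum x A * infsum y B"
    by (simp add: infsum_cmult_left')
  finally show "infsum (\<lambda>(a,b). x a * y b) (A \<times> B) = infsum x A * infsum y B" .
qed

definition fib :: "nat \<times> nat \<Rightarrow> (nat \<times> nat) set" where
  "fib = (\<lambda>(k,l). {..k}\<times>{..l})"

definition hmap :: "(nat\<times>nat)\<times>(nat\<times>nat) \<Rightarrow> (nat\<times>nat)\<times>(nat\<times>nat)" where
  "hmap = (\<lambda>((k,l),(i,j)). ((i,j),(k-i,l-j)))"

lemma hmap_bij: "bij_betw hmap (Sigma UNIV fib) UNIV"
proof (rule bij_betwI[where g="\<lambda>((i,j),(a,b)). ((i+a,j+b),(i,j))"])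
  show "hmap \<in> Sigma UNIV fib \<rightarrow> UNIV" by simp
  show "(\<lambda>((i,j),(a,b)). ((i+a,j+b),(i,j))) \<in> UNIV \<rightarrow> Sigma UNIV fib"
    by (auto simp: fib_def)
  show "\<And>x. x \<in> Sigma UNIV fib \<Longrightarrow> (\<lambda>((i,j),(a,b)). ((i+a,j+b),(i,j))) (hmap x) = x"
    by (auto simp: fib_def hmap_def)
  show "\<And>y. y \<in> UNIV \<Longrightarrow> hmap ((\<lambda>((i,j),(a,b)). ((i+a,j+b),(i,j))) y) = y"
    by (auto simp: hmap_def)
qed

lemma tm_cmul_fib:
  "sum (\<lambda>(i,j). tm c z w (i,j) * tm e z w (k-i,l-j)) (fib (k,l)) = tm (cmul c e) z w (k,l)"
proof -
  have "\<And>i j. i \<le> k \<Longrightarrow> j \<le> l \<Longrightarrow> tm c z w (i,j) * tm e z w (k-i,l-j) = c i j * e (k-i) (l-j) * z^k * w^l"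
  proof -
    fix i j assume "i \<le> k" "j \<le> l"
    then have "z^k = z^i * z^(k-i)" "w^l = w^j * w^(l-j)" by (simp_all add: power_add[symmetric])
    then show "tm c z w (i,j) * tm e z w (k-i,l-j) = c i j * e (k-i) (l-j) * z^k * w^l"
      by (simp add: tm_def algebra_simps)
  qed
  then have "sum (\<lambda>(i,j). tm c z w (i,j) * tm e z w (k-i,l-j)) (fib (k,l)) =
     sum (\<lambda>(i,j). c i j * e (k-i) (l-j) * z^k * w^l) ({..k}\<times>{..l})"
    unfolding fib_def by (intro sum.cong) auto
  also have "\<dots> = tm (cmul c e) z w (k,l)"
    by (simp add: tm_def cmul_def sum_distrib_right case_prod_unfold)
  finally show ?thesis .
qed

lemma tm_cmul:
  fixes c e :: "nat \<Rightarrow> nat \<Rightarrow> 'a::{real_normed_field,banach}"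
  assumes c: "(\<lambda>p. norm (tm c z w p)) summable_on UNIV"
    and e: "(\<lambda>p. norm (tm e z w p)) summable_on UNIV"
  shows "tm (cmul c e) z w summable_on UNIV"
    "infsum (tm (cmul c e) z w) UNIV = infsum (tm c z w) UNIV * infsum (tm e z w) UNIV"
proof -
  define F where "F = (\<lambda>(a,b). tm c z w a * tm e z w b)"
  have Fa: "(\<lambda>p. norm (F p)) summable_on UNIV \<times> UNIV" and Fs: "infsum F (UNIV\<times>UNIV) = infsum (tm c z w) UNIV * infsum (tm e z w) UNIV"
    using product_sum[OF c e] unfolding F_def by auto
  have Fsum: "F summable_on UNIV"
    using abs_summable_summable[OF Fa] by simp
  have G: "(\<lambda>x. F (hmap x)) summable_on Sigma UNIV fib"
    using summable_on_reindex_bij_betw[OF hmap_bij] Fsum by blast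
  have Geq: "\<And>k l. infsum (\<lambda>y. F (hmap ((k,l),y))) (fib (k,l)) = tm (cmul c e) z w (k,l)"
  proof -
    fix k l
    have "finite (fib (k,l))" by (simp add: fib_def)
    then have "infsum (\<lambda>y. F (hmap ((k,l),y))) (fib (k,l)) = sum (\<lambda>y. F (hmap ((k,l),y))) (fib (k,l))"
      by (rule infsum_finite)
    also have "\<dots> = sum (\<lambda>(i,j). tm c z w (i,j) * tm e z w (k-i,l-j)) (fib (k,l))"
      by (rule sum.cong) (auto simp: F_def hmap_def)
    also have "\<dots> = tm (cmul c e) z w (k,l)" by (rule tm_cmul_fib)
    finally show "infsum (\<lambda>y. F (hmap ((k,l),y))) (fib (k,l)) = tm (cmul c e) z w (k,l)" .
  qed
  have fin: "\<And>x. (\<lambda>y. F (hmap (x,y))) summable_on fib x"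
    by (rule summable_on_finite) (auto simp: fib_def split: prod.splits)
  have Geq': "(\<lambda>x. infsum (\<lambda>y. F (hmap (x,y))) (fib x)) = tm (cmul c e) z w"
  proof
    fix x :: "nat\<times>nat" obtain k l where "x=(k,l)" by fastforce
    then show "infsum (\<lambda>y. F (hmap (x,y))) (fib x) = tm (cmul c e) z w x" using Geq by simp
  qed
  have "(\<lambda>x. infsum (\<lambda>y. F (hmap (x,y))) (fib x)) summable_on UNIV"
    using summable_on_SigmaD[OF G fin] by simp
  then show "tm (cmul c e) z w summable_on UNIV"
    using Geq' by simp
  have "infsum (\<lambda>x. infsum (\<lambda>y. F (hmap (x,y))) (fib x)) UNIV = infsum (\<lambda>x. F (hmap x)) (Sigma UNIV fib)"
    using infsum_Sigma_banach[OF G] by simp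
  also have "\<dots> = infsum F UNIV"
    using infsum_reindex_bij_betw[OF hmap_bij] by blast
  finally show "infsum (tm (cmul c e) z w) UNIV = infsum (tm c z w) UNIV * infsum (tm e z w) UNIV"
    using Geq' Fs by simp
qed

definition nc :: "(nat \<Rightarrow> nat \<Rightarrow> complex) \<Rightarrow> nat \<Rightarrow> nat \<Rightarrow> real" where
  "nc c = (\<lambda>i j. norm (c i j))"
definition amaj :: "(nat \<Rightarrow> nat \<Rightarrow> complex) \<Rightarrow> real \<Rightarrow> bool" where
  "amaj c \<rho> \<longleftrightarrow> tm (nc c) \<rho> \<rho> summable_on UNIV"
definition Mj :: "(nat \<Rightarrow> nat \<Rightarrow> complex) \<Rightarrow> real \<Rightarrow> real" where
  "Mj c \<rho> = infsum (tm (nc c) \<rho> \<rho>) UNIV"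
definition ev :: "(nat \<Rightarrow> nat \<Rightarrow> complex) \<Rightarrow> complex \<Rightarrow> complex \<Rightarrow> complex" where
  "ev c z w = infsum (tm c z w) UNIV"

lemma tm_nc_nonneg: "\<rho> \<ge> 0 \<Longrightarrow> tm (nc c) \<rho> \<rho> p \<ge> 0"
  by (auto simp: tm_def nc_def case_prod_unfold)

lemma Mj_nonneg: "\<rho> \<ge> 0 \<Longrightarrow> Mj c \<rho> \<ge> 0"
  unfolding Mj_def by (rule infsum_nonneg) (rule tm_nc_nonneg)

lemma norm_tm_le: "\<rho> \<ge> 0 \<Longrightarrow> norm z \<le> \<rho> \<Longrightarrow> norm w \<le> \<rho> \<Longrightarrow> norm (tm c z w p) \<le> tm (nc c) \<rho> \<rho> p"
  unfolding tm_def nc_def case_prod_unfold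
  by (auto simp: norm_mult norm_power intro!: mult_mono power_mono mult_nonneg_nonneg)

lemma amaj_tm:
  assumes "\<rho> \<ge> 0" "amaj c \<rho>" "norm z \<le> \<rho>" "norm w \<le> \<rho>"
  shows "(\<lambda>p. norm (tm c z w p)) summable_on UNIV" "tm c z w summable_on UNIV"
    "norm (ev c z w) \<le> Mj c \<rho>"
proof -
  show 1: "(\<lambda>p. norm (tm c z w p)) summable_on UNIV"
  proof (rule summable_on_comparison_test[where f="tm (nc c) \<rho> \<rho>"])
    show "tm (nc c) \<rho> \<rho> summable_on UNIV" using assms(2) unfolding amaj_def .
    show "\<And>x. x \<in> UNIV \<Longrightarrow> norm (tm c z w x) \<le> tm (nc c) \<rho> \<rho> x" using norm_tm_le assms by blast
  qed simp
  show 2: "tm c z w summable_on UNIV" by (rule abs_summable_summable[OF 1])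
  show "norm (ev c z w) \<le> Mj c \<rho>" unfolding ev_def Mj_def
  proof (rule norm_infsum_le[OF has_sum_infsum[OF 2] has_sum_infsum])
    show "tm (nc c) \<rho> \<rho> summable_on UNIV" using assms(2) unfolding amaj_def .
    show "\<And>x. x \<in> UNIV \<Longrightarrow> norm (tm c z w x) \<le> tm (nc c) \<rho> \<rho> x" using norm_tm_le assms by blast
  qed
qed

lemma nc_cmul_le: "nc (cmul c e) k l \<le> cmul (nc c) (nc e) k l"
  unfolding nc_def cmul_def
proof (rule order_trans[OF norm_sum])
  show "(\<Sum>i\<in>{..k} \<times> {..l}. norm (case i of (i, j) \<Rightarrow> c i j * e (k - i) (l - j)))
    \<le> (\<Sum>(i, j)\<in>{..k} \<times> {..l}. norm (c i j) * norm (e (k - i) (l - j)))"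
    by (rule sum_mono) (simp add: norm_mult case_prod_unfold)
qed

lemma amaj_cmul:
  assumes r: "\<rho> \<ge> 0" and c: "amaj c \<rho>" and e: "amaj e \<rho>"
  shows "amaj (cmul c e) \<rho>" "Mj (cmul c e) \<rho> \<le> Mj c \<rho> * Mj e \<rho>"
proof -
  have nn: "\<And>c. (\<lambda>p. norm (tm (nc c) \<rho> \<rho> p)) = tm (nc c) \<rho> \<rho>"
    by (rule ext) (simp add: tm_nc_nonneg[OF r])
  have c': "(\<lambda>p. norm (tm (nc c) \<rho> \<rho> p)) summable_on UNIV" using c unfolding nn amaj_def .
  have e': "(\<lambda>p. norm (tm (nc e) \<rho> \<rho> p)) summable_on UNIV" using e unfolding nn amaj_def .
  note T = tm_cmul[OF c' e']
  have le: "\<And>p. tm (nc (cmul c e)) \<rho> \<rho> p \<le> tm (cmul (nc c) (nc e)) \<rho> \<rho> p"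
    unfolding tm_def case_prod_unfold using r
    by (auto intro!: mult_right_mono nc_cmul_le)
  show 1: "amaj (cmul c e) \<rho>" unfolding amaj_def
    by (rule summable_on_comparison_test[OF T(1)]) (auto simp: le tm_nc_nonneg r)
  have "Mj (cmul c e) \<rho> \<le> infsum (tm (cmul (nc c) (nc e)) \<rho> \<rho>) UNIV"
    unfolding Mj_def using 1 T(1) le by (intro infsum_mono) (auto simp: amaj_def)
  also have "\<dots> = Mj c \<rho> * Mj e \<rho>" using T(2) by (simp add: Mj_def)
  finally show "Mj (cmul c e) \<rho> \<le> Mj c \<rho> * Mj e \<rho>" .
qed

lemma ev_cmul:
  assumes "\<rho> \<ge> 0" "amaj c \<rho>" "amaj e \<rho>" "norm z \<le> \<rho>" "norm w \<le> \<rho>"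
  shows "ev (cmul c e) z w = ev c z w * ev e z w"
  unfolding ev_def using tm_cmul(2)[OF amaj_tm(1)[OF assms(1,2,4,5)] amaj_tm(1)[OF assms(1,3,4,5)]] .

lemma fin_supp:
  assumes "finite A" "\<And>p. p \<notin> A \<Longrightarrow> f p = (0::'a::{comm_monoid_add,t2_space})"
  shows "f summable_on UNIV" "infsum f UNIV = sum f A"
proof -
  have "f summable_on UNIV \<longleftrightarrow> f summable_on A"
    by (rule summable_on_cong_neutral) (use assms in auto)
  then show "f summable_on UNIV" using assms(1) by simp
  have "infsum f UNIV = infsum f A"
    by (rule infsum_cong_neutral) (use assms in auto)
  then show "infsum f UNIV = sum f A" using assms(1) by simp
qed

definition one_s :: "nat \<Rightarrow> nat \<Rightarrow> complex" where
  "one_s k l = (if k = 0 \<and> l = 0 then 1 else 0)"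

fun spow :: "(nat \<Rightarrow> nat \<Rightarrow> complex) \<Rightarrow> nat \<Rightarrow> nat \<Rightarrow> nat \<Rightarrow> complex" where
  "spow c 0 = one_s"
| "spow c (Suc n) = cmul c (spow c n)"

lemma one_s_props: "\<rho> \<ge> 0 \<Longrightarrow> amaj one_s \<rho> \<and> Mj one_s \<rho> = 1 \<and> ev one_s z w = 1"
proof -
  have a: "\<And>p. p \<notin> {(0,0)} \<Longrightarrow> tm (nc one_s) \<rho> \<rho> p = 0"
    "\<And>p. p \<notin> {(0,0)} \<Longrightarrow> tm one_s z w p = 0"
    by (auto simp: tm_def nc_def one_s_def case_prod_unfold)
  show "\<rho> \<ge> 0 \<Longrightarrow> ?thesis"
    using fin_supp[of "{(0,0)}" "tm (nc one_s) \<rho> \<rho>", OF _ a(1)] fin_supp[of "{(0,0)}" "tm one_s z w", OF _ a(2)]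
    unfolding amaj_def Mj_def ev_def by (simp add: tm_def nc_def one_s_def)
qed

lemma spow_props:
  assumes r: "\<rho> \<ge> 0" and c: "amaj c \<rho>"
  shows "amaj (spow c n) \<rho> \<and> Mj (spow c n) \<rho> \<le> Mj c \<rho> ^ n \<and>
    (\<forall>z w. norm z \<le> \<rho> \<longrightarrow> norm w \<le> \<rho> \<longrightarrow> ev (spow c n) z w = ev c z w ^ n)"
proof (induction n)
  case 0 then show ?case using one_s_props[OF r] by simp
next
  case (Suc n)
  then have A: "amaj (spow c n) \<rho>" and B: "Mj (spow c n) \<rho> \<le> Mj c \<rho> ^ n" by auto
  have "Mj (spow c (Suc n)) \<rho> \<le> Mj c \<rho> * Mj (spow c n) \<rho>"
    using amaj_cmul(2)[OF r c A] by simp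
  also have "\<dots> \<le> Mj c \<rho> * Mj c \<rho> ^ n"
    by (rule mult_left_mono[OF B Mj_nonneg[OF r]])
  finally show ?case using amaj_cmul(1)[OF r c A] Suc ev_cmul[OF r c A] by auto
qed


definition Tij :: "(nat \<Rightarrow> nat \<Rightarrow> complex) \<Rightarrow> (nat \<Rightarrow> nat \<Rightarrow> complex) \<Rightarrow> nat \<Rightarrow> nat \<Rightarrow> nat \<Rightarrow> nat \<Rightarrow> complex" where
  "Tij U V i j = cmul (spow U i) (spow V j)"

definition cmp2 :: "(nat \<Rightarrow> nat \<Rightarrow> complex) \<Rightarrow> (nat \<Rightarrow> nat \<Rightarrow> complex) \<Rightarrow> (nat \<Rightarrow> nat \<Rightarrow> complex) \<Rightarrow> nat \<Rightarrow> nat \<Rightarrow> complex" where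
  "cmp2 b U V k l = infsum (\<lambda>(i,j). b i j * Tij U V i j k l) UNIV"

lemma Tij_props:
  assumes r: "\<rho> \<ge> 0" and U: "amaj U \<rho>" and V: "amaj V \<rho>"
  shows "amaj (Tij U V i j) \<rho>" "Mj (Tij U V i j) \<rho> \<le> Mj U \<rho> ^ i * Mj V \<rho> ^ j"
    "norm z \<le> \<rho> \<Longrightarrow> norm w \<le> \<rho> \<Longrightarrow> ev (Tij U V i j) z w = ev U z w ^ i * ev V z w ^ j"
proof -
  note SU = spow_props[OF r U, of i] and SV = spow_props[OF r V, of j]
  show "amaj (Tij U V i j) \<rho>" unfolding Tij_def using amaj_cmul(1)[OF r] SU SV by blast
  have "Mj (Tij U V i j) \<rho> \<le> Mj (spow U i) \<rho> * Mj (spow V j) \<rho>"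
    unfolding Tij_def using amaj_cmul(2)[OF r] SU SV by blast
  also have "\<dots> \<le> Mj U \<rho> ^ i * Mj V \<rho> ^ j"
    using SU SV by (intro mult_mono) (auto simp: Mj_nonneg r)
  finally show "Mj (Tij U V i j) \<rho> \<le> Mj U \<rho> ^ i * Mj V \<rho> ^ j" .
  show "norm z \<le> \<rho> \<Longrightarrow> norm w \<le> \<rho> \<Longrightarrow> ev (Tij U V i j) z w = ev U z w ^ i * ev V z w ^ j"
    unfolding Tij_def using ev_cmul[OF r] SU SV by simp
qed

lemma comp_lemma:
  assumes r: "\<rho> > 0" and U: "amaj U \<rho>" and V: "amaj V \<rho>" and b: "amaj b R"
    and MU: "Mj U \<rho> \<le> R" and MV: "Mj V \<rho> \<le> R"
  shows "amaj (cmp2 b U V) \<rho>"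
    "\<And>k l. ((\<lambda>(i,j). b i j * Tij U V i j k l) has_sum cmp2 b U V k l) UNIV"
    "\<And>z w. norm z \<le> \<rho> \<Longrightarrow> norm w \<le> \<rho> \<Longrightarrow> ev (cmp2 b U V) z w = ev b (ev U z w) (ev V z w)"
proof -
  have r0: "\<rho> \<ge> 0" using r by simp
  have R0: "R \<ge> 0" using MU Mj_nonneg[OF r0, of U] by linarith
  define Psi where "Psi = (\<lambda>((i,j),(k,l)). norm (b i j) * tm (nc (Tij U V i j)) \<rho> \<rho> (k,l))"
  have Psi_nn: "\<And>p. Psi p \<ge> 0" unfolding Psi_def using tm_nc_nonneg[OF r0] by (auto simp: case_prod_unfold)
  have Psi_sum: "Psi summable_on UNIV \<times> UNIV"
  proof (rule summable_on_SigmaI[where g="\<lambda>(i,j). norm (b i j) * Mj (Tij U V i j) \<rho>"])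
    fix x :: "nat\<times>nat" assume "x \<in> UNIV"
    obtain i j where x: "x = (i,j)" by fastforce
    have "(tm (nc (Tij U V i j)) \<rho> \<rho> has_sum Mj (Tij U V i j) \<rho>) UNIV"
      using Tij_props(1)[OF r0 U V] unfolding amaj_def Mj_def by auto
    from has_sum_cmult_right[OF this, of "norm (b i j)"]
    show "((\<lambda>y. Psi (x, y)) has_sum (case x of (i, j) \<Rightarrow> norm (b i j) * Mj (Tij U V i j) \<rho>)) UNIV"
      unfolding x Psi_def by (simp add: case_prod_unfold)
  next
    show "(\<lambda>(i,j). norm (b i j) * Mj (Tij U V i j) \<rho>) summable_on UNIV"
    proof (rule summable_on_comparison_test[where f="tm (nc b) R R"])
      show "tm (nc b) R R summable_on UNIV" using b unfolding amaj_def .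
      fix x :: "nat\<times>nat" obtain i j where x: "x = (i,j)" by fastforce
      have "Mj (Tij U V i j) \<rho> \<le> R^i * R^j"
        using Tij_props(2)[OF r0 U V, of i j] MU MV Mj_nonneg[OF r0, of U] Mj_nonneg[OF r0, of V]
        by (meson order_trans mult_mono power_mono zero_le_power)
      then show "(case x of (i, j) \<Rightarrow> norm (b i j) * Mj (Tij U V i j) \<rho>) \<le> tm (nc b) R R x"
        unfolding x tm_def nc_def by (simp add: mult.assoc mult_left_mono)
      show "0 \<le> (case x of (i, j) \<Rightarrow> norm (b i j) * Mj (Tij U V i j) \<rho>)"
        unfolding x using Mj_nonneg[OF r0] by simp
    qed
  qed (use Psi_nn in auto)
  define sw where "sw = (\<lambda>(p::nat\<times>nat, q::nat\<times>nat). (q,p))"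
  have swb: "bij_betw sw UNIV UNIV"
    by (rule bij_betwI[where g=sw]) (auto simp: sw_def case_prod_unfold)
  have Psi'_sum: "(\<lambda>x. Psi (sw x)) summable_on UNIV \<times> UNIV"
    using summable_on_reindex_bij_betw[OF swb, of Psi] Psi_sum by simp
  have eta: "(\<lambda>(x,y). Psi (sw (x,y))) = (\<lambda>x. Psi (sw x))" by auto
  have Psi'2: "(\<lambda>(x,y). Psi (sw (x,y))) summable_on UNIV \<times> UNIV" unfolding eta by (rule Psi'_sum)
  have inner_abs: "\<And>k l. (\<lambda>(i,j). norm (b i j * Tij U V i j k l)) summable_on UNIV"
  proof -
    fix k l
    have "(\<lambda>y. Psi (sw ((k,l),y))) summable_on UNIV"
      using summable_on_SigmaD1[of "\<lambda>x y. Psi (sw (x,y))" UNIV "\<lambda>_. UNIV" "(k,l)"] Psi'2 by simp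
    then have "(\<lambda>y. Psi (sw ((k,l),y)) * inverse (\<rho>^k * \<rho>^l)) summable_on UNIV"
      by (rule summable_on_cmult_left)
    then have "(\<lambda>y. Psi (sw ((k,l),y)) / (\<rho>^k * \<rho>^l)) summable_on UNIV"
      by (simp add: divide_inverse)
    moreover have "(\<lambda>y. Psi (sw ((k,l),y)) / (\<rho>^k * \<rho>^l)) = (\<lambda>(i,j). norm (b i j * Tij U V i j k l))"
      using r by (auto simp: Psi_def sw_def tm_def nc_def norm_mult fun_eq_iff)
    ultimately show "(\<lambda>(i,j). norm (b i j * Tij U V i j k l)) summable_on UNIV" by simp
  qed
  have inner_sum: "\<And>k l. (\<lambda>(i,j). b i j * Tij U V i j k l) summable_on UNIV"
    using abs_summable_summable[OF inner_abs[unfolded case_prod_unfold]] by (simp add: case_prod_unfold)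
  show "\<And>k l. ((\<lambda>(i,j). b i j * Tij U V i j k l) has_sum cmp2 b U V k l) UNIV"
    unfolding cmp2_def using inner_sum by simp
  have bound: "\<And>k l. tm (nc (cmp2 b U V)) \<rho> \<rho> (k,l) \<le> infsum (\<lambda>y. Psi (sw ((k,l),y))) UNIV"
  proof -
    fix k l
    have s1: "(\<lambda>y. Psi (sw ((k,l),y))) summable_on UNIV"
      using summable_on_SigmaD1[of "\<lambda>x y. Psi (sw (x,y))" UNIV "\<lambda>_. UNIV" "(k,l)"] Psi'2 by simp
    have "norm (cmp2 b U V k l) \<le> infsum (\<lambda>(i,j). norm (b i j * Tij U V i j k l)) UNIV"
      unfolding cmp2_def using inner_sum inner_abs by (intro norm_infsum_le[OF has_sum_infsum has_sum_infsum]) auto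
    then have "norm (cmp2 b U V k l) * (\<rho>^k * \<rho>^l) \<le> infsum (\<lambda>(i,j). norm (b i j * Tij U V i j k l)) UNIV * (\<rho>^k * \<rho>^l)"
      using r0 by (simp add: mult_right_mono)
    also have "\<dots> = infsum (\<lambda>(i,j). norm (b i j * Tij U V i j k l) * (\<rho>^k * \<rho>^l)) UNIV"
      by (simp add: infsum_cmult_left' case_prod_unfold)
    also have "\<dots> = infsum (\<lambda>y. Psi (sw ((k,l),y))) UNIV"
      by (rule infsum_cong) (auto simp: Psi_def sw_def tm_def nc_def norm_mult case_prod_unfold)
    finally show "tm (nc (cmp2 b U V)) \<rho> \<rho> (k,l) \<le> infsum (\<lambda>y. Psi (sw ((k,l),y))) UNIV"
      by (simp add: tm_def nc_def mult.assoc)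
  qed
  have outer: "(\<lambda>x. infsum (\<lambda>y. Psi (sw (x,y))) UNIV) summable_on UNIV"
  proof -
    have "\<And>x. (\<lambda>y. Psi (sw (x, y))) summable_on UNIV"
      using summable_on_SigmaD1[of "\<lambda>x y. Psi (sw (x,y))" UNIV "\<lambda>_. UNIV"] Psi'2 by simp
    then show ?thesis
      using summable_on_SigmaD[of "\<lambda>x. Psi (sw x)" UNIV "\<lambda>_. UNIV"] Psi'_sum by simp
  qed
  show "amaj (cmp2 b U V) \<rho>" unfolding amaj_def
  proof (rule summable_on_comparison_test[OF outer])
    fix x :: "nat\<times>nat" obtain k l where x: "x = (k,l)" by fastforce
    show "tm (nc (cmp2 b U V)) \<rho> \<rho> x \<le> infsum (\<lambda>y. Psi (sw (x,y))) UNIV" using bound x by simp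
    show "0 \<le> tm (nc (cmp2 b U V)) \<rho> \<rho> x" using tm_nc_nonneg[OF r0] by simp
  qed
  fix z w :: complex assume z: "norm z \<le> \<rho>" and w: "norm w \<le> \<rho>"
  define Phi where "Phi = (\<lambda>((i,j),(k,l)). b i j * tm (Tij U V i j) z w (k,l))"
  have Phi_le: "\<And>p. norm (Phi p) \<le> Psi p"
    unfolding Phi_def Psi_def case_prod_unfold norm_mult
    by (intro mult_left_mono norm_tm_le[OF r0 z w]) auto
  have Phi_abs: "(\<lambda>p. norm (Phi p)) summable_on UNIV \<times> UNIV"
    by (rule summable_on_comparison_test[OF Psi_sum]) (use Phi_le in auto)
  have Phi_sum: "Phi summable_on UNIV \<times> UNIV" using abs_summable_summable[OF Phi_abs] .
  have Phi'_sum: "(\<lambda>x. Phi (sw x)) summable_on UNIV \<times> UNIV"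
    using summable_on_reindex_bij_betw[OF swb, of Phi] Phi_sum by simp
  have u: "norm (ev U z w) \<le> R" and v: "norm (ev V z w) \<le> R"
    using amaj_tm(3)[OF r0 U z w] amaj_tm(3)[OF r0 V z w] MU MV by auto
  have A: "\<And>x. infsum (\<lambda>y. Phi (x,y)) UNIV = tm b (ev U z w) (ev V z w) x"
  proof -
    fix x :: "nat\<times>nat" obtain i j where x: "x = (i,j)" by fastforce
    have "infsum (\<lambda>y. Phi (x,y)) UNIV = b i j * infsum (tm (Tij U V i j) z w) UNIV"
      unfolding x Phi_def by (simp add: infsum_cmult_right' case_prod_unfold)
    also have "\<dots> = tm b (ev U z w) (ev V z w) x"
      using Tij_props(3)[OF r0 U V z w] unfolding x tm_def ev_def by simp
    finally show "infsum (\<lambda>y. Phi (x,y)) UNIV = tm b (ev U z w) (ev V z w) x" .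
  qed
  have "infsum Phi (UNIV \<times> UNIV) = infsum (\<lambda>x. infsum (\<lambda>y. Phi (x,y)) UNIV) UNIV"
    using infsum_Sigma_banach[OF Phi_sum] by simp
  also have "\<dots> = ev b (ev U z w) (ev V z w)" using A by (simp add: ev_def)
  finally have E1: "infsum Phi (UNIV \<times> UNIV) = ev b (ev U z w) (ev V z w)" .
  have B: "\<And>x. infsum (\<lambda>y. Phi (sw (x,y))) UNIV = tm (cmp2 b U V) z w x"
  proof -
    fix x :: "nat\<times>nat" obtain k l where x: "x = (k,l)" by fastforce
    have "infsum (\<lambda>y. Phi (sw (x,y))) UNIV = infsum (\<lambda>(i,j). b i j * Tij U V i j k l * (z^k * w^l)) UNIV"
      unfolding x by (rule infsum_cong) (auto simp: Phi_def sw_def tm_def case_prod_unfold mult.assoc)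
    also have "\<dots> = cmp2 b U V k l * (z^k * w^l)"
      unfolding cmp2_def by (simp add: infsum_cmult_left' case_prod_unfold)
    finally show "infsum (\<lambda>y. Phi (sw (x,y))) UNIV = tm (cmp2 b U V) z w x"
      unfolding x tm_def by (simp add: mult.assoc)
  qed
  have "infsum (\<lambda>x. Phi (sw x)) (UNIV \<times> UNIV) = infsum (\<lambda>x. infsum (\<lambda>y. Phi (sw (x,y))) UNIV) UNIV"
    using infsum_Sigma_banach[OF Phi'_sum] by simp
  also have "\<dots> = ev (cmp2 b U V) z w" using B by (simp add: ev_def)
  finally have E2: "infsum (\<lambda>x. Phi (sw x)) (UNIV \<times> UNIV) = ev (cmp2 b U V) z w" .
  have "infsum (\<lambda>x. Phi (sw x)) (UNIV \<times> UNIV) = infsum Phi (UNIV \<times> UNIV)"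
    using infsum_reindex_bij_betw[OF swb, of Phi] by simp
  then show "ev (cmp2 b U V) z w = ev b (ev U z w) (ev V z w)" using E1 E2 by simp
qed


lemma uniq1:
  fixes a :: "nat \<Rightarrow> complex"
  assumes s: "s > 0" and h: "\<And>x. norm x < s \<Longrightarrow> (\<lambda>n. a n * x ^ n) sums 0"
  shows "a n = 0"
proof (induction n rule: less_induct)
  case (less n)
  have H: "\<And>x. x \<noteq> 0 \<Longrightarrow> norm x < s \<Longrightarrow> (\<lambda>k. a (k + n) * x ^ k) sums 0"
  proof -
    fix x :: complex assume x: "x \<noteq> 0" "norm x < s"
    have "(\<lambda>k. a (k + n) * x ^ (k + n)) sums (0 - (\<Sum>i<n. a i * x ^ i))"
      using sums_split_initial_segment[OF h[OF x(2)]] .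
    also have "(\<Sum>i<n. a i * x ^ i) = 0" using less by simp
    finally have "(\<lambda>k. a (k + n) * x ^ (k + n) / x ^ n) sums (0 / x ^ n)"
      using sums_divide by fastforce
    moreover have "\<And>k. a (k + n) * x ^ (k + n) / x ^ n = a (k + n) * x ^ k"
      using x(1) by (simp add: power_add)
    ultimately show "(\<lambda>k. a (k + n) * x ^ k) sums 0" by simp
  qed
  have "((\<lambda>_::complex. 0::complex) \<longlongrightarrow> a n) (at (0::complex))"
    using powser_limit_0_strong[OF s, where a="\<lambda>k. a (k + n)" and f="\<lambda>_. 0"] H by simp
  then show "a n = 0" using LIM_unique[OF _ tendsto_const] by force
qed

lemma has_exp2_amaj:
  assumes "has_expansion2 g c"
  shows "\<exists>R>0. amaj c R \<and> (\<forall>z w. norm z \<le> R \<longrightarrow> norm w \<le> R \<longrightarrow> g z w = ev c z w)"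
proof -
  obtain r where r: "r > 0" and h: "\<And>z w. norm z < r \<Longrightarrow> norm w < r \<Longrightarrow>
      ((\<lambda>(i,j). c i j * z ^ i * w ^ j) has_sum g z w) UNIV"
    using assms unfolding has_expansion2_def by blast
  define R where "R = r / 2"
  have R: "R > 0" "R < r" using r by (auto simp: R_def)
  have "tm c (of_real R) (of_real R) summable_on UNIV"
    using h[of "of_real R" "of_real R"] R unfolding tm_def summable_on_def by auto
  then have "(\<lambda>p. norm (tm c (of_real R) (of_real R) p)) summable_on UNIV"
    using summable_on_iff_abs_summable_on_complex by blast
  moreover have "(\<lambda>p. norm (tm c (of_real R) (of_real R) p)) = tm (nc c) R R"
    using R by (auto simp: tm_def nc_def norm_mult norm_power fun_eq_iff)
  ultimately have "amaj c R" unfolding amaj_def by simp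
  moreover have "\<forall>z w. norm z \<le> R \<longrightarrow> norm w \<le> R \<longrightarrow> g z w = ev c z w"
    using h R unfolding ev_def tm_def by (metis (no_types, lifting) infsumI le_less_trans)
  ultimately show ?thesis using R by blast
qed

lemma amaj_has_exp2:
  assumes "R > 0" "amaj c R" "\<And>z w. norm z \<le> R \<Longrightarrow> norm w \<le> R \<Longrightarrow> g z w = ev c z w"
  shows "has_expansion2 g c"
  unfolding has_expansion2_def
proof (intro exI conjI allI impI)
  show "R > 0" by fact
  fix z w :: complex assume zw: "norm z < R \<and> norm w < R"
  then have s: "tm c z w summable_on UNIV" using amaj_tm(2)[OF _ assms(2)] assms(1) by auto
  have "g z w = ev c z w" using assms(3) zw by auto
  then show "((\<lambda>(i,j). c i j * z ^ i * w ^ j) has_sum g z w) UNIV"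
    using s unfolding ev_def tm_def by simp
qed

lemma exp2_unique:
  assumes "has_expansion2 g c" "has_expansion2 g c'"
  shows "c = c'"
proof -
  obtain R1 where R1: "R1 > 0" "amaj c R1" "\<forall>z w. norm z \<le> R1 \<longrightarrow> norm w \<le> R1 \<longrightarrow> g z w = ev c z w"
    using has_exp2_amaj[OF assms(1)] by blast
  obtain R2 where R2: "R2 > 0" "amaj c' R2" "\<forall>z w. norm z \<le> R2 \<longrightarrow> norm w \<le> R2 \<longrightarrow> g z w = ev c' z w"
    using has_exp2_amaj[OF assms(2)] by blast
  define R where "R = min R1 R2"
  have R: "R > 0" "R \<le> R1" "R \<le> R2" using R1 R2 by (auto simp: R_def)
  define e where "e = (\<lambda>i j. c i j - c' i j)"
  have S: "\<And>z w. norm z \<le> R \<Longrightarrow> norm w \<le> R \<Longrightarrow> (tm e z w has_sum 0) UNIV"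
  proof -
    fix z w :: complex assume zw: "norm z \<le> R" "norm w \<le> R"
    have s1: "tm c z w summable_on UNIV" using amaj_tm(2)[of R1 c z w] R1 R zw by auto
    have s2: "tm c' z w summable_on UNIV" using amaj_tm(2)[of R2 c' z w] R2 R zw by auto
    have "((\<lambda>p. tm c z w p + - tm c' z w p) has_sum (ev c z w + - ev c' z w)) UNIV"
      unfolding ev_def by (intro has_sum_add has_sum_uminusI has_sum_infsum s1 s2)
    moreover have "ev c z w + - ev c' z w = 0"
    proof -
      have "g z w = ev c z w" using R1(3) R zw by auto
      moreover have "g z w = ev c' z w" using R2(3) R zw by auto
      ultimately show ?thesis by simp
    qed
    moreover have "(\<lambda>p. tm c z w p + - tm c' z w p) = tm e z w"
      by (auto simp: tm_def e_def fun_eq_iff algebra_simps)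
    ultimately show "(tm e z w has_sum 0) UNIV" by simp
  qed
  define F where "F = (\<lambda>i w. infsum (\<lambda>j. e i j * w ^ j) UNIV)"
  have inner: "\<And>i w. norm w \<le> R \<Longrightarrow> ((\<lambda>j. e i j * w ^ j) has_sum F i w) UNIV"
  proof -
    fix i and w :: complex assume w: "norm w \<le> R"
    have "(\<lambda>(x,y). tm e (of_real R) w (x,y)) summable_on Sigma UNIV (\<lambda>_. UNIV)"
      using S[of "of_real R" w] w R by (auto simp: summable_on_def)
    from summable_on_SigmaD1[OF this, of i]
    have "(\<lambda>j. (of_real R) ^ i * (e i j * w ^ j)) summable_on UNIV"
      by (simp add: tm_def algebra_simps)
    then have "(\<lambda>j. e i j * w ^ j) summable_on UNIV"
      using summable_on_cmult_right'[of "(of_real R::complex) ^ i"] R by auto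
    then show "((\<lambda>j. e i j * w ^ j) has_sum F i w) UNIV" unfolding F_def by simp
  qed
  have F0: "\<And>i w. norm w < R \<Longrightarrow> F i w = 0"
  proof -
    fix i and w :: complex assume w: "norm w < R"
    have "\<And>z. norm z < R \<Longrightarrow> (\<lambda>i. F i w * z ^ i) sums 0"
    proof -
      fix z :: complex assume z: "norm z < R"
      have "((\<lambda>i. F i w * z ^ i) has_sum 0) UNIV"
      proof (rule has_sum_Sigma'[where f="tm e z w" and B="\<lambda>_. UNIV"])
        show "(tm e z w has_sum 0) (UNIV \<times> UNIV)" using S z w by simp
        fix i :: nat
        show "((\<lambda>j. tm e z w (i, j)) has_sum F i w * z ^ i) UNIV"
          using has_sum_cmult_right[OF inner[of w i], of "z^i"] w
          by (simp add: tm_def algebra_simps)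
      qed
      then show "(\<lambda>i. F i w * z ^ i) sums 0" by (rule has_sum_imp_sums)
    qed
    then show "F i w = 0" using uniq1[OF R(1), of "\<lambda>i. F i w"] by blast
  qed
  have "\<And>i j. e i j = 0"
  proof -
    fix i j
    have "\<And>w. norm w < R \<Longrightarrow> (\<lambda>j. e i j * w ^ j) sums 0"
      using inner F0 by (metis has_sum_imp_sums less_imp_le)
    then show "e i j = 0" using uniq1[OF R(1), of "\<lambda>j. e i j"] by blast
  qed
  then show "c = c'" by (auto simp: e_def fun_eq_iff)
qed

lemma coeffs2_eq: "has_expansion2 g c \<Longrightarrow> coeffs2 g = c"
  unfolding coeffs2_def using exp2_unique by blast

lemma reidx:
  fixes f :: "nat\<times>nat\<Rightarrow>'b::{comm_monoid_add,t2_space}"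
  assumes f0: "\<And>i j. j \<noteq> 0 \<Longrightarrow> f (i,j) = 0"
  shows "(f has_sum s) UNIV \<longleftrightarrow> ((\<lambda>i. f (i,0)) has_sum s) UNIV"
proof -
    have "(f has_sum s) UNIV \<longleftrightarrow> (f has_sum s) ((\<lambda>i. (i,0)) ` UNIV)"
    proof (rule has_sum_cong_neutral)
      show "\<And>x. x \<in> range (\<lambda>i. (i, 0)) - UNIV \<Longrightarrow> f x = 0" by simp
      show "\<And>x. x \<in> UNIV \<inter> range (\<lambda>i. (i, 0)) \<Longrightarrow> f x = f x" by simp
      fix x :: "nat\<times>nat" assume "x \<in> UNIV - range (\<lambda>i. (i, 0))"
      then obtain i j where "x = (i,j)" "j \<noteq> 0" by (metis DiffD2 prod.collapse rangeI)
      then show "f x = 0" using f0 by simp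
    qed
    also have "\<dots> \<longleftrightarrow> ((f \<circ> (\<lambda>i. (i,0))) has_sum s) UNIV"
      by (rule has_sum_reindex) (auto simp: inj_on_def)
    finally show ?thesis by (simp add: o_def)
qed

definition lift1 :: "(nat \<Rightarrow> complex) \<Rightarrow> nat \<Rightarrow> nat \<Rightarrow> complex" where
  "lift1 a i j = (if j = 0 then a i else 0)"

lemma has_exp1_amaj:
  assumes "has_expansion1 p a"
  shows "\<exists>R>0. amaj (lift1 a) R \<and> (\<forall>z w. norm z \<le> R \<longrightarrow> p z = ev (lift1 a) z w)"
proof -
  obtain r where r: "r > 0" and h: "\<And>z. norm z < r \<Longrightarrow> (\<lambda>i. a i * z ^ i) sums p z"
    using assms unfolding has_expansion1_def by blast
  define R where "R = r / 4"
  have R: "R > 0" "2 * R < r" using r by (auto simp: R_def)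
  have sm: "summable (\<lambda>n. a n * (of_real (2*R)) ^ n)"
    using h[of "of_real (2*R)"] R by (auto simp: sums_iff)
  have ns: "\<And>z. norm z \<le> R \<Longrightarrow> summable (\<lambda>n. norm (a n * z ^ n))"
    using powser_insidea[OF sm] R by (simp add: abs_of_pos)
  have "summable (\<lambda>n. norm (a n * (of_real R) ^ n))" using ns[of "of_real R"] R by simp
  then have "(\<lambda>n. norm (a n * (of_real R) ^ n)) summable_on UNIV"
    using norm_summable_imp_summable_on[of "\<lambda>n. norm (a n * (of_real R) ^ n)"] by simp
  then have "(\<lambda>i. tm (nc (lift1 a)) R R (i,0)) summable_on UNIV"
    using R by (simp add: tm_def nc_def lift1_def norm_mult norm_power)
  then have "amaj (lift1 a) R" unfolding amaj_def summable_on_def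
    using reidx[of "tm (nc (lift1 a)) R R"] by (auto simp: tm_def nc_def lift1_def)
  moreover have "\<forall>z w. norm z \<le> R \<longrightarrow> p z = ev (lift1 a) z w"
  proof (intro allI impI)
    fix z w :: complex assume z: "norm z \<le> R"
    have "((\<lambda>i. a i * z ^ i) has_sum p z) UNIV"
      using norm_summable_imp_has_sum[OF ns[OF z] h] z R by simp
    then have "((\<lambda>i. tm (lift1 a) z w (i,0)) has_sum p z) UNIV" by (simp add: tm_def lift1_def)
    then have "(tm (lift1 a) z w has_sum p z) UNIV"
      using reidx[of "tm (lift1 a) z w"] by (auto simp: tm_def lift1_def)
    then show "p z = ev (lift1 a) z w" unfolding ev_def by (simp add: infsumI)
  qed
  ultimately show ?thesis using R by blast
qed


definition lev :: "nat \<Rightarrow> nat \<Rightarrow> (nat \<Rightarrow> nat \<Rightarrow> complex) \<Rightarrow> nat \<Rightarrow> nat \<Rightarrow> nat \<Rightarrow> nat \<Rightarrow> nat \<Rightarrow> bool" where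
  "lev wa wb c L x1 y1 x2 y2 \<longleftrightarrow>
    (\<forall>k l. c k l \<noteq> 0 \<longrightarrow> L \<le> wa*k + wb*l) \<and>
    (\<forall>k l. c k l \<noteq> 0 \<and> wa*k + wb*l = L \<longrightarrow> x1 \<le> k \<and> k \<le> x2) \<and>
    wa*x1 + wb*y1 = L \<and> wa*x2 + wb*y2 = L \<and> c x1 y1 \<noteq> 0 \<and> c x2 y2 \<noteq> 0"

lemma wsum: "wa*(a+b) + wb*(c+d) = (wa*a + wb*c) + (wa*b + wb*(d::nat))"
  by (simp add: algebra_simps)

lemma cmul_single:
  assumes "i0 \<le> k" "j0 \<le> l" "\<And>i j. i \<le> k \<Longrightarrow> j \<le> l \<Longrightarrow> (i,j) \<noteq> (i0,j0) \<Longrightarrow> c i j * e (k-i) (l-j) = 0"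
  shows "cmul c e k l = c i0 j0 * e (k-i0) (l-j0)"
proof -
  have "cmul c e k l = (\<Sum>(i,j)\<in>{..k}\<times>{..l}. c i j * e (k-i) (l-j))" by (simp add: cmul_def)
  also have "\<dots> = (\<lambda>(i,j). c i j * e (k-i) (l-j)) (i0,j0) + (\<Sum>(i,j)\<in>{..k}\<times>{..l} - {(i0,j0)}. c i j * e (k-i) (l-j))"
    by (rule sum.remove) (use assms in auto)
  also have "(\<Sum>(i,j)\<in>{..k}\<times>{..l} - {(i0,j0)}. c i j * e (k-i) (l-j)) = 0"
    by (rule sum.neutral) (use assms(3) in auto)
  finally show ?thesis by simp
qed

lemma cmul_nz:
  assumes "cmul c e k l \<noteq> 0"
  obtains i j where "i \<le> k" "j \<le> l" "c i j \<noteq> 0" "e (k-i) (l-j) \<noteq> 0"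
proof -
  have "(\<Sum>(i,j)\<in>{..k}\<times>{..l}. c i j * e (k-i) (l-j)) \<noteq> 0" using assms by (simp add: cmul_def)
  then obtain p where "p \<in> {..k}\<times>{..l}" "(\<lambda>(i,j). c i j * e (k-i) (l-j)) p \<noteq> 0"
    by (meson sum.not_neutral_contains_not_neutral)
  moreover obtain i j where "p = (i,j)" by fastforce
  ultimately have "i \<le> k" "j \<le> l" "c i j \<noteq> 0" "e (k-i) (l-j) \<noteq> 0" by auto
  then show ?thesis by (rule that)
qed

lemma cmul_lev:
  assumes wb: "wb > 0"
    and c: "lev wa wb c L1 x1 y1 x2 y2" and e: "lev wa wb e L2 u1 v1 u2 v2"
  shows "lev wa wb (cmul c e) (L1+L2) (x1+u1) (y1+v1) (x2+u2) (y2+v2)"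
    "cmul c e (x1+u1) (y1+v1) = c x1 y1 * e u1 v1"
    "cmul c e (x2+u2) (y2+v2) = c x2 y2 * e u2 v2"
proof -
  have c1: "\<And>k l. c k l \<noteq> 0 \<Longrightarrow> L1 \<le> wa*k + wb*l"
    and c2: "\<And>k l. c k l \<noteq> 0 \<Longrightarrow> wa*k + wb*l = L1 \<Longrightarrow> x1 \<le> k \<and> k \<le> x2"
    and c3: "wa*x1 + wb*y1 = L1" and c4: "wa*x2 + wb*y2 = L1" and c5: "c x1 y1 \<noteq> 0" and c6: "c x2 y2 \<noteq> 0"
    using c unfolding lev_def by blast+
  have e1: "\<And>k l. e k l \<noteq> 0 \<Longrightarrow> L2 \<le> wa*k + wb*l"
    and e2: "\<And>k l. e k l \<noteq> 0 \<Longrightarrow> wa*k + wb*l = L2 \<Longrightarrow> u1 \<le> k \<and> k \<le> u2"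
    and e3: "wa*u1 + wb* v1 = L2" and e4: "wa*u2 + wb* v2 = L2" and e5: "e u1 v1 \<noteq> 0" and e6: "e u2 v2 \<noteq> 0"
    using e unfolding lev_def by blast+
  have key: "\<And>k l i j. i \<le> k \<Longrightarrow> j \<le> l \<Longrightarrow> c i j \<noteq> 0 \<Longrightarrow> e (k-i) (l-j) \<noteq> 0 \<Longrightarrow>
      L1 + L2 \<le> wa*k + wb*l \<and> (wa*k + wb*l = L1 + L2 \<longrightarrow>
        wa*i + wb*j = L1 \<and> wa*(k-i) + wb*(l-j) = L2 \<and> x1 \<le> i \<and> i \<le> x2 \<and> u1 \<le> k-i \<and> k-i \<le> u2)"
  proof -
    fix k l i j assume h: "i \<le> k" "j \<le> l" "c i j \<noteq> 0" "e (k-i) (l-j) \<noteq> 0"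
    obtain a b where ab: "k = i + a" "l = j + b" using h(1,2) le_iff_add by metis
    have s: "wa*k + wb*l = (wa*i + wb*j) + (wa*(k-i) + wb*(l-j))"
      unfolding ab by (simp add: algebra_simps)
    have a1: "L1 \<le> wa*i + wb*j" and a2: "L2 \<le> wa*(k-i) + wb*(l-j)" using c1 e1 h by auto
    show "L1 + L2 \<le> wa*k + wb*l \<and> (wa*k + wb*l = L1 + L2 \<longrightarrow>
        wa*i + wb*j = L1 \<and> wa*(k-i) + wb*(l-j) = L2 \<and> x1 \<le> i \<and> i \<le> x2 \<and> u1 \<le> k-i \<and> k-i \<le> u2)"
    proof (intro conjI impI)
      show "L1 + L2 \<le> wa*k + wb*l" using s a1 a2 by linarith
      assume eq: "wa*k + wb*l = L1 + L2"
      show q1: "wa*i + wb*j = L1" using s a1 a2 eq by linarith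
      show q2: "wa*(k-i) + wb*(l-j) = L2" using s a1 a2 eq by linarith
      show "x1 \<le> i" "i \<le> x2" using c2 h(3) q1 by auto
      show "u1 \<le> k-i" "k-i \<le> u2" using e2 h(4) q2 by auto
    qed
  qed
  have yl: "\<And>j y. wa*x1 + wb*j = wa*x1 + wb*y \<Longrightarrow> j = y" using wb by simp
  have lo: "cmul c e (x1+u1) (y1+v1) = c x1 y1 * e u1 v1"
  proof -
    have "cmul c e (x1+u1) (y1+v1) = c x1 y1 * e (x1+u1-x1) (y1+v1-y1)"
    proof (rule cmul_single)
      fix i j assume h: "i \<le> x1+u1" "j \<le> y1+v1" "(i,j) \<noteq> (x1,y1)"
      show "c i j * e (x1 + u1 - i) (y1 + v1 - j) = 0"
      proof (rule ccontr)
        assume "c i j * e (x1 + u1 - i) (y1 + v1 - j) \<noteq> 0"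
        then have nz: "c i j \<noteq> 0" "e (x1 + u1 - i) (y1 + v1 - j) \<noteq> 0" by auto
        have "wa*(x1+u1) + wb*(y1+v1) = L1 + L2" using c3 e3 by (simp only: wsum)
        then have K: "wa*i + wb*j = L1" "x1 \<le> i" "u1 \<le> x1+u1-i" using key[OF h(1,2) nz] by auto
        then have "i = x1" using h(1) by arith
        then have "wa*x1 + wb*j = L1" using K(1) by simp
        then have "wb*j = wb*y1" using c3 by linarith
        then have "j = y1" using wb by simp
        then show False using h(3) \<open>i = x1\<close> by simp
      qed
    qed simp_all
    then show ?thesis by simp
  qed
  have yh: "\<And>j y. wa*x2 + wb*j = wa*x2 + wb*y \<Longrightarrow> j = y" using wb by simp
  have hi: "cmul c e (x2+u2) (y2+v2) = c x2 y2 * e u2 v2"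
  proof -
    have "cmul c e (x2+u2) (y2+v2) = c x2 y2 * e (x2+u2-x2) (y2+v2-y2)"
    proof (rule cmul_single)
      fix i j assume h: "i \<le> x2+u2" "j \<le> y2+v2" "(i,j) \<noteq> (x2,y2)"
      show "c i j * e (x2 + u2 - i) (y2 + v2 - j) = 0"
      proof (rule ccontr)
        assume "c i j * e (x2 + u2 - i) (y2 + v2 - j) \<noteq> 0"
        then have nz: "c i j \<noteq> 0" "e (x2 + u2 - i) (y2 + v2 - j) \<noteq> 0" by auto
        have "wa*(x2+u2) + wb*(y2+v2) = L1 + L2" using c4 e4 by (simp only: wsum)
        then have K: "wa*i + wb*j = L1" "i \<le> x2" "x2+u2-i \<le> u2" using key[OF h(1,2) nz] by auto
        then have "i = x2" using h(1) by arith
        then have "wa*x2 + wb*j = L1" using K(1) by simp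
        then have "wb*j = wb*y2" using c4 by linarith
        then have "j = y2" using wb by simp
        then show False using h(3) \<open>i = x2\<close> by simp
      qed
    qed simp_all
    then show ?thesis by simp
  qed
  show "cmul c e (x1+u1) (y1+v1) = c x1 y1 * e u1 v1" by (rule lo)
  show "cmul c e (x2+u2) (y2+v2) = c x2 y2 * e u2 v2" by (rule hi)
  have g1: "\<forall>k l. cmul c e k l \<noteq> 0 \<longrightarrow> L1 + L2 \<le> wa*k + wb*l"
  proof (intro allI impI)
    fix k l assume "cmul c e k l \<noteq> 0"
    then obtain i j where h: "i \<le> k" "j \<le> l" "c i j \<noteq> 0" "e (k-i) (l-j) \<noteq> 0" by (rule cmul_nz)
    show "L1 + L2 \<le> wa*k + wb*l" using key[OF h] by blast
  qed
  have g2: "\<forall>k l. cmul c e k l \<noteq> 0 \<and> wa*k + wb*l = L1 + L2 \<longrightarrow> x1 + u1 \<le> k \<and> k \<le> x2 + u2"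
  proof (intro allI impI)
    fix k l assume a: "cmul c e k l \<noteq> 0 \<and> wa*k + wb*l = L1 + L2"
    then obtain i j where h: "i \<le> k" "j \<le> l" "c i j \<noteq> 0" "e (k-i) (l-j) \<noteq> 0"
      using cmul_nz by metis
    have "x1 \<le> i \<and> i \<le> x2 \<and> u1 \<le> k-i \<and> k-i \<le> u2" using key[OF h] a by blast
    then show "x1 + u1 \<le> k \<and> k \<le> x2 + u2" using h(1) by linarith
  qed
  have g3: "wa*(x1+u1) + wb*(y1+v1) = L1 + L2" "wa*(x2+u2) + wb*(y2+v2) = L1 + L2"
    using c3 e3 c4 e4 by (simp_all only: wsum)
  have g4: "cmul c e (x1+u1) (y1+v1) \<noteq> 0" "cmul c e (x2+u2) (y2+v2) \<noteq> 0"
    using lo hi c5 c6 e5 e6 by simp_all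
  show "lev wa wb (cmul c e) (L1+L2) (x1+u1) (y1+v1) (x2+u2) (y2+v2)"
    unfolding lev_def using g1 g2 g3 g4 by blast
qed

lemma one_s_lev: "lev wa wb one_s 0 0 0 0 0"
  unfolding lev_def one_s_def by auto

lemma spow_lev:
  assumes wb: "wb > 0" and c: "lev wa wb c L x1 y1 x2 y2"
  shows "lev wa wb (spow c n) (n*L) (n*x1) (n*y1) (n*x2) (n*y2) \<and>
    spow c n (n*x1) (n*y1) = c x1 y1 ^ n \<and> spow c n (n*x2) (n*y2) = c x2 y2 ^ n"
proof (induction n)
  case 0
  have "lev wa wb one_s 0 0 0 0 0" by (rule one_s_lev)
  then show ?case by (simp add: one_s_def[of 0 0])
next
  case (Suc n)
  then have I: "lev wa wb (spow c n) (n*L) (n*x1) (n*y1) (n*x2) (n*y2)" by blast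
  note C = cmul_lev[OF wb c I]
  show ?case using C Suc by (simp add: add.commute)
qed

lemma Tij_lev:
  assumes wb: "wb > 0" and U: "lev wa wb U LU xu1 yu1 xu2 yu2" and V: "lev wa wb V LV xv1 yv1 xv2 yv2"
  shows "lev wa wb (Tij U V i j) (i*LU + j*LV) (i*xu1 + j*xv1) (i*yu1 + j*yv1) (i*xu2 + j*xv2) (i*yu2 + j*yv2)"
    "Tij U V i j (i*xu1 + j*xv1) (i*yu1 + j*yv1) = U xu1 yu1 ^ i * V xv1 yv1 ^ j"
    "Tij U V i j (i*xu2 + j*xv2) (i*yu2 + j*yv2) = U xu2 yu2 ^ i * V xv2 yv2 ^ j"
proof -
  note A = spow_lev[OF wb U, of i] and B = spow_lev[OF wb V, of j]
  have A1: "lev wa wb (spow U i) (i*LU) (i*xu1) (i*yu1) (i*xu2) (i*yu2)" using A by blast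
  have B1: "lev wa wb (spow V j) (j*LV) (j*xv1) (j*yv1) (j*xv2) (j*yv2)" using B by blast
  note C = cmul_lev[OF wb A1 B1]
  show "lev wa wb (Tij U V i j) (i*LU + j*LV) (i*xu1 + j*xv1) (i*yu1 + j*yv1) (i*xu2 + j*xv2) (i*yu2 + j*yv2)"
    using C(1) by (simp add: Tij_def)
  show "Tij U V i j (i*xu1 + j*xv1) (i*yu1 + j*yv1) = U xu1 yu1 ^ i * V xv1 yv1 ^ j"
    using C(2) A B by (simp add: Tij_def)
  show "Tij U V i j (i*xu2 + j*xv2) (i*yu2 + j*yv2) = U xu2 yu2 ^ i * V xv2 yv2 ^ j"
    using C(3) A B by (simp add: Tij_def)
qed


lemma wlin: "wa*(i*x1 + j*x2) + wb*(i*y1 + j*y2) = i*(wa*x1 + wb*y1) + j*(wa*x2 + wb*(y2::nat))"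
  by (simp add: algebra_simps)

lemma comp_lev:
  assumes wb: "wb > 0"
    and U: "lev wa wb U LU xu1 yu1 xu2 yu2" and V: "lev wa wb V LV xv1 yv1 xv2 yv2"
    and hb: "\<And>i j. b i j \<noteq> 0 \<Longrightarrow> L \<le> i*LU + j*LV"
    and hE: "\<And>i j. b i j \<noteq> 0 \<Longrightarrow> i*LU + j*LV = L \<Longrightarrow> X1 \<le> i*xu1 + j*xv1 \<and> i*xu2 + j*xv2 \<le> X2"
    and lo1: "b i0 j0 \<noteq> 0" and lo2: "i0*LU + j0*LV = L" and lo3: "X1 = i0*xu1 + j0*xv1"
    and lo4: "Y1 = i0*yu1 + j0*yv1"
    and lo5: "\<And>i j. b i j \<noteq> 0 \<Longrightarrow> i*LU + j*LV = L \<Longrightarrow> (i,j) \<noteq> (i0,j0) \<Longrightarrow> X1 < i*xu1 + j*xv1"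
    and hi1: "b i1 j1 \<noteq> 0" and hi2: "i1*LU + j1*LV = L" and hi3: "X2 = i1*xu2 + j1*xv2"
    and hi4: "Y2 = i1*yu2 + j1*yv2"
    and hi5: "\<And>i j. b i j \<noteq> 0 \<Longrightarrow> i*LU + j*LV = L \<Longrightarrow> (i,j) \<noteq> (i1,j1) \<Longrightarrow> i*xu2 + j*xv2 < X2"
  shows "lev wa wb (cmp2 b U V) L X1 Y1 X2 Y2"
proof -
  note TL = Tij_lev[OF wb U V]
  have T1: "\<And>i j k l. Tij U V i j k l \<noteq> 0 \<Longrightarrow> i*LU + j*LV \<le> wa*k + wb*l"
    using TL(1) unfolding lev_def by blast
  have T2: "\<And>i j k l. Tij U V i j k l \<noteq> 0 \<Longrightarrow> wa*k + wb*l = i*LU + j*LV \<Longrightarrow>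
      i*xu1 + j*xv1 \<le> k \<and> k \<le> i*xu2 + j*xv2"
    using TL(1) unfolding lev_def by blast
  have U3: "wa*xu1 + wb*yu1 = LU" "wa*xu2 + wb*yu2 = LU" "U xu1 yu1 \<noteq> 0" "U xu2 yu2 \<noteq> 0"
    using U unfolding lev_def by blast+
  have V3: "wa*xv1 + wb*yv1 = LV" "wa*xv2 + wb*yv2 = LV" "V xv1 yv1 \<noteq> 0" "V xv2 yv2 \<noteq> 0"
    using V unfolding lev_def by blast+
  have zero: "\<And>k l. (\<And>i j. b i j * Tij U V i j k l = 0) \<Longrightarrow> cmp2 b U V k l = 0"
  proof -
    fix k l assume h: "\<And>i j. b i j * Tij U V i j k l = 0"
    have "(\<lambda>(i,j). b i j * Tij U V i j k l) = (\<lambda>_. 0)" using h by auto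
    then show "cmp2 b U V k l = 0" unfolding cmp2_def by simp
  qed
  have nz: "\<And>k l. cmp2 b U V k l \<noteq> 0 \<Longrightarrow> \<exists>i j. b i j \<noteq> 0 \<and> Tij U V i j k l \<noteq> 0"
    using zero by (metis mult_eq_0_iff)
  have single: "\<And>k l i' j'. (\<And>i j. (i,j) \<noteq> (i',j') \<Longrightarrow> b i j * Tij U V i j k l = 0) \<Longrightarrow>
      cmp2 b U V k l = b i' j' * Tij U V i' j' k l"
  proof -
    fix k l i' j' assume h: "\<And>i j. (i,j) \<noteq> (i',j') \<Longrightarrow> b i j * Tij U V i j k l = 0"
    have "infsum (\<lambda>(i,j). b i j * Tij U V i j k l) UNIV = sum (\<lambda>(i,j). b i j * Tij U V i j k l) {(i',j')}"
    proof (rule fin_supp(2))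
      fix p :: "nat\<times>nat" assume "p \<notin> {(i',j')}"
      moreover obtain i j where "p = (i,j)" by fastforce
      ultimately show "(\<lambda>(i,j). b i j * Tij U V i j k l) p = 0" using h by simp
    qed simp
    then show "cmp2 b U V k l = b i' j' * Tij U V i' j' k l" by (simp add: cmp2_def)
  qed
  have g1: "\<forall>k l. cmp2 b U V k l \<noteq> 0 \<longrightarrow> L \<le> wa*k + wb*l"
  proof (intro allI impI)
    fix k l assume "cmp2 b U V k l \<noteq> 0"
    then obtain i j where "b i j \<noteq> 0" "Tij U V i j k l \<noteq> 0" using nz by blast
    then show "L \<le> wa*k + wb*l" using hb T1 by (meson order_trans)
  qed
  have g2: "\<forall>k l. cmp2 b U V k l \<noteq> 0 \<and> wa*k + wb*l = L \<longrightarrow> X1 \<le> k \<and> k \<le> X2"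
  proof (intro allI impI)
    fix k l assume a: "cmp2 b U V k l \<noteq> 0 \<and> wa*k + wb*l = L"
    then obtain i j where ij: "b i j \<noteq> 0" "Tij U V i j k l \<noteq> 0" using nz by blast
    have "L \<le> i*LU + j*LV" "i*LU + j*LV \<le> wa*k + wb*l" using hb[OF ij(1)] T1[OF ij(2)] by auto
    then have e: "i*LU + j*LV = L" using a by linarith
    then have "i*xu1 + j*xv1 \<le> k \<and> k \<le> i*xu2 + j*xv2" using T2[OF ij(2)] a by simp
    then show "X1 \<le> k \<and> k \<le> X2" using hE[OF ij(1) e] by linarith
  qed
  have w1: "wa*X1 + wb*Y1 = L" unfolding lo3 lo4 wlin using U3 V3 lo2 by simp
  have w2: "wa*X2 + wb*Y2 = L" unfolding hi3 hi4 wlin using U3 V3 hi2 by simp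
  have c1: "cmp2 b U V X1 Y1 = b i0 j0 * Tij U V i0 j0 X1 Y1"
  proof (rule single)
    fix i j assume ne: "(i,j) \<noteq> (i0,j0)"
    show "b i j * Tij U V i j X1 Y1 = 0"
    proof (rule ccontr)
      assume "b i j * Tij U V i j X1 Y1 \<noteq> 0"
      then have ij: "b i j \<noteq> 0" "Tij U V i j X1 Y1 \<noteq> 0" by auto
      have "L \<le> i*LU + j*LV" "i*LU + j*LV \<le> wa*X1 + wb*Y1" using hb[OF ij(1)] T1[OF ij(2)] by auto
      then have e: "i*LU + j*LV = L" using w1 by linarith
      then have "i*xu1 + j*xv1 \<le> X1" using T2[OF ij(2)] w1 by simp
      then show False using lo5[OF ij(1) e ne] by linarith
    qed
  qed
  have c2: "cmp2 b U V X2 Y2 = b i1 j1 * Tij U V i1 j1 X2 Y2"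
  proof (rule single)
    fix i j assume ne: "(i,j) \<noteq> (i1,j1)"
    show "b i j * Tij U V i j X2 Y2 = 0"
    proof (rule ccontr)
      assume "b i j * Tij U V i j X2 Y2 \<noteq> 0"
      then have ij: "b i j \<noteq> 0" "Tij U V i j X2 Y2 \<noteq> 0" by auto
      have "L \<le> i*LU + j*LV" "i*LU + j*LV \<le> wa*X2 + wb*Y2" using hb[OF ij(1)] T1[OF ij(2)] by auto
      then have e: "i*LU + j*LV = L" using w2 by linarith
      then have "X2 \<le> i*xu2 + j*xv2" using T2[OF ij(2)] w2 by simp
      then show False using hi5[OF ij(1) e ne] by linarith
    qed
  qed
  have "Tij U V i0 j0 X1 Y1 = U xu1 yu1 ^ i0 * V xv1 yv1 ^ j0" unfolding lo3 lo4 by (rule TL(2))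
  then have n1: "cmp2 b U V X1 Y1 \<noteq> 0" using c1 lo1 U3 V3 by simp
  have "Tij U V i1 j1 X2 Y2 = U xu2 yu2 ^ i1 * V xv2 yv2 ^ j1" unfolding hi3 hi4 by (rule TL(3))
  then have n2: "cmp2 b U V X2 Y2 \<noteq> 0" using c2 hi1 U3 V3 by simp
  show ?thesis unfolding lev_def using g1 g2 w1 w2 n1 n2 by blast
qed


definition face :: "real \<Rightarrow> real \<Rightarrow> real \<Rightarrow> real \<Rightarrow> real \<Rightarrow> real set \<Rightarrow> (real\<times>real) set" where
  "face \<alpha> \<beta> A \<gamma> \<delta> I = {p. A \<le> \<alpha>*fst p + \<beta>* snd p \<and> (\<alpha>*fst p + \<beta>* snd p = A \<longrightarrow> \<gamma>*fst p + \<delta>* snd p \<in> I)}"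

lemma two_nonneg_zero:
  fixes u a b :: real
  assumes "0 < u" "u < 1" "0 \<le> a" "0 \<le> b" "(1-u)*a + u*b = 0"
  shows "a = 0" "b = 0"
proof -
  have "(1-u)*a \<ge> 0" "u*b \<ge> 0" using assms by auto
  then have "(1-u)*a = 0" "u*b = 0" using assms(5) by linarith+
  then show "a = 0" "b = 0" using assms(1,2) by auto
qed

lemma convex_face: assumes I: "convex I" shows "convex (face \<alpha> \<beta> A \<gamma> \<delta> I)"
  unfolding convex_alt
proof (intro ballI allI impI)
  fix x y :: "real\<times>real" and u :: real
  assume x: "x \<in> face \<alpha> \<beta> A \<gamma> \<delta> I" and y: "y \<in> face \<alpha> \<beta> A \<gamma> \<delta> I" and u: "0 \<le> u \<and> u \<le> 1"
  define fx where "fx = \<alpha>*fst x + \<beta>* snd x"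
  define fy where "fy = \<alpha>*fst y + \<beta>* snd y"
  define gx where "gx = \<gamma>*fst x + \<delta>* snd x"
  define gy where "gy = \<gamma>*fst y + \<delta>* snd y"
  have fx: "A \<le> fx" "fx = A \<Longrightarrow> gx \<in> I" using x by (auto simp: face_def fx_def gx_def)
  have fy: "A \<le> fy" "fy = A \<Longrightarrow> gy \<in> I" using y by (auto simp: face_def fy_def gy_def)
  let ?z = "(1 - u) *\<^sub>R x + u *\<^sub>R y"
  have fz: "\<alpha>*fst ?z + \<beta>* snd ?z = (1-u)*fx + u*fy" by (simp add: fx_def fy_def algebra_simps)
  have gz: "\<gamma>*fst ?z + \<delta>* snd ?z = (1-u)*gx + u*gy" by (simp add: gx_def gy_def algebra_simps)
  have "(1-u)*A \<le> (1-u)*fx" "u*A \<le> u*fy" using fx fy u by (auto intro: mult_left_mono)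
  then have A: "A \<le> (1-u)*fx + u*fy" by (simp add: algebra_simps)
  have B: "(1-u)*gx + u*gy \<in> I" if e: "(1-u)*fx + u*fy = A"
  proof (cases "u = 0")
    case True then show ?thesis using e fx by simp
  next
    case False
    show ?thesis
    proof (cases "u = 1")
      case True then show ?thesis using e fy by simp
    next
      case False2: False
      have u': "0 < u" "u < 1" using u False False2 by auto
      have "(1-u)*(fx - A) + u*(fy - A) = 0" using e by (simp add: algebra_simps)
      then have "fx - A = 0" "fy - A = 0" using two_nonneg_zero[OF u', of "fx - A" "fy - A"] fx fy by auto
      then have "gx \<in> I" "gy \<in> I" using fx fy by auto
      then show ?thesis using I u unfolding convex_alt by auto
    qed
  qed
  show "?z \<in> face \<alpha> \<beta> A \<gamma> \<delta> I" unfolding face_def using fz gz A B by simp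
qed

lemma ext_face:
  assumes N: "N \<subseteq> face \<alpha> \<beta> A \<gamma> \<delta> {\<gamma>*fst P + \<delta>* snd P..}" and P: "P \<in> N" "\<alpha>*fst P + \<beta>* snd P = A"
    and inj: "\<alpha>*\<delta> \<noteq> \<beta>*\<gamma>"
  shows "P extreme_point_of N"
  unfolding extreme_point_of_def
proof (intro conjI ballI notI)
  show "P \<in> N" by fact
  fix a b assume a: "a \<in> N" and b: "b \<in> N" and s: "P \<in> open_segment a b"
  then obtain u where ab: "a \<noteq> b" and u: "0 < u" "u < 1" and Pu: "P = (1 - u) *\<^sub>R a + u *\<^sub>R b"
    by (auto simp: in_segment)
  define fa where "fa = \<alpha>*fst a + \<beta>* snd a"
  define fb where "fb = \<alpha>*fst b + \<beta>* snd b"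
  define ga where "ga = \<gamma>*fst a + \<delta>* snd a"
  define gb where "gb = \<gamma>*fst b + \<delta>* snd b"
  define gP where "gP = \<gamma>*fst P + \<delta>* snd P"
  have fa: "A \<le> fa" "fa = A \<Longrightarrow> gP \<le> ga" using N a by (auto simp: face_def fa_def ga_def gP_def)
  have fb: "A \<le> fb" "fb = A \<Longrightarrow> gP \<le> gb" using N b by (auto simp: face_def fb_def gb_def gP_def)
  have fP: "(1-u)*fa + u*fb = A" using P(2) by (simp add: Pu fa_def fb_def algebra_simps)
  have gPe: "gP = (1-u)*ga + u*gb" by (simp add: Pu ga_def gb_def gP_def algebra_simps)
  have "(1-u)*(fa - A) + u*(fb - A) = 0" using fP by (simp add: algebra_simps)
  then have "fa - A = 0" "fb - A = 0" using two_nonneg_zero[OF u, of "fa - A" "fb - A"] fa fb by auto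
  then have "gP \<le> ga" "gP \<le> gb" using fa fb by auto
  moreover have "(1-u)*(ga - gP) + u*(gb - gP) = 0" using gPe by (simp add: algebra_simps)
  ultimately have "ga - gP = 0" "gb - gP = 0" using two_nonneg_zero[OF u, of "ga - gP" "gb - gP"] by auto
  have sol: "\<And>p q. \<alpha>*fst p + \<beta>* snd p = \<alpha>*fst q + \<beta>* snd q \<Longrightarrow> \<gamma>*fst p + \<delta>* snd p = \<gamma>*fst q + \<delta>* snd q \<Longrightarrow> p = q"
  proof -
    fix p q :: "real\<times>real"
    assume e1: "\<alpha>*fst p + \<beta>* snd p = \<alpha>*fst q + \<beta>* snd q" and e2: "\<gamma>*fst p + \<delta>* snd p = \<gamma>*fst q + \<delta>* snd q"
    define s t where "s = fst p - fst q" and "t = snd p - snd q"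
    have 1: "\<alpha>* s + \<beta>*t = 0" "\<gamma>* s + \<delta>*t = 0" using e1 e2 by (auto simp: s_def t_def algebra_simps)
    have "(\<alpha>*\<delta> - \<beta>*\<gamma>)* s = \<delta>*(\<alpha>* s + \<beta>*t) - \<beta>*(\<gamma>* s + \<delta>*t)" by (simp add: algebra_simps)
    then have "s = 0" using 1 inj by simp
    have "(\<alpha>*\<delta> - \<beta>*\<gamma>)*t = \<alpha>*(\<gamma>* s + \<delta>*t) - \<gamma>*(\<alpha>* s + \<beta>*t)" by (simp add: algebra_simps)
    then have "t = 0" using 1 inj by simp
    show "p = q" using \<open>s = 0\<close> \<open>t = 0\<close> by (simp add: s_def t_def prod_eq_iff)
  qed
  have "a = b" using sol[of a b] \<open>fa - A = 0\<close> \<open>fb - A = 0\<close> \<open>ga - gP = 0\<close> \<open>gb - gP = 0\<close>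
    by (simp add: fa_def fb_def ga_def gb_def)
  then show False using ab by simp
qed

definition supp_set :: "(nat \<Rightarrow> nat \<Rightarrow> complex) \<Rightarrow> (real\<times>real) set" where
  "supp_set c = \<Union>{ {(x,y). x \<ge> real i \<and> y \<ge> real j} | i j. c i j \<noteq> 0}"

lemma supp_set_iff: "p \<in> supp_set c \<longleftrightarrow> (\<exists>i j. c i j \<noteq> 0 \<and> real i \<le> fst p \<and> real j \<le> snd p)"
proof
  assume "p \<in> supp_set c"
  then obtain i j where "c i j \<noteq> 0" "p \<in> {(x,y). x \<ge> real i \<and> y \<ge> real j}" unfolding supp_set_def by blast
  then show "\<exists>i j. c i j \<noteq> 0 \<and> real i \<le> fst p \<and> real j \<le> snd p" by (cases p) auto
next
  assume "\<exists>i j. c i j \<noteq> 0 \<and> real i \<le> fst p \<and> real j \<le> snd p"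
  then obtain i j where "c i j \<noteq> 0" "real i \<le> fst p" "real j \<le> snd p" by blast
  then have "p \<in> {(x,y). x \<ge> real i \<and> y \<ge> real j}" "c i j \<noteq> 0" by (cases p, auto)
  then show "p \<in> supp_set c" unfolding supp_set_def by blast
qed

lemma np_def': "newton_polygon c = convex hull (supp_set c)"
  by (simp add: newton_polygon_def supp_set_def)

lemma np_subset:
  assumes "convex F" "\<And>i j x y. c i j \<noteq> 0 \<Longrightarrow> real i \<le> x \<Longrightarrow> real j \<le> y \<Longrightarrow> (x,y) \<in> F"
  shows "newton_polygon c \<subseteq> F"
  unfolding np_def'
proof (rule hull_minimal)
  show "supp_set c \<subseteq> F"
  proof
    fix p assume "p \<in> supp_set c"
    then obtain i j where "c i j \<noteq> 0" "real i \<le> fst p" "real j \<le> snd p" unfolding supp_set_iff by blast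
    then have "(fst p, snd p) \<in> F" using assms(2) by blast
    then show "p \<in> F" by simp
  qed
qed (use assms in simp)

lemma np_supp: "c i j \<noteq> 0 \<Longrightarrow> (real i, real j) \<in> newton_polygon c"
  unfolding np_def' by (rule hull_inc) (auto simp: supp_set_iff)

lemma np_convex: "convex (newton_polygon c)"
  unfolding np_def' by simp

lemma np_up:
  assumes "p \<in> newton_polygon c" "h1 \<ge> 0" "h2 \<ge> 0"
  shows "p + (h1,h2) \<in> newton_polygon c"
proof -
  have sub: "(\<lambda>x. (h1,h2) + x) ` supp_set c \<subseteq> supp_set c"
  proof
    fix q assume "q \<in> (\<lambda>x. (h1,h2) + x) ` supp_set c"
    then obtain x where x: "x \<in> supp_set c" "q = (h1,h2) + x" by blast
    then obtain i j where "c i j \<noteq> 0" "real i \<le> fst x" "real j \<le> snd x" unfolding supp_set_iff by blast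
    then show "q \<in> supp_set c" unfolding supp_set_iff x(2) using assms(2,3) by fastforce
  qed
  have "(h1,h2) + p \<in> (\<lambda>x. (h1,h2) + x) ` (convex hull supp_set c)" using assms(1) unfolding np_def' by (rule imageI)
  also have "\<dots> = convex hull ((\<lambda>x. (h1,h2) + x) ` supp_set c)" by (rule convex_hull_translation[symmetric])
  also have "\<dots> \<subseteq> convex hull supp_set c" by (rule hull_mono[OF sub])
  finally show ?thesis by (simp add: np_def' add.commute)
qed

lemma np_notext_up:
  assumes "p \<in> newton_polygon c" "h1 \<ge> 0" "h2 \<ge> 0" "(h1,h2) \<noteq> (0,0)"
  shows "\<not> (p + (h1,h2)) extreme_point_of newton_polygon c"
proof
  assume e: "(p + (h1,h2)) extreme_point_of newton_polygon c"
  have q: "p + (2*h1,2*h2) \<in> newton_polygon c" using np_up[OF assms(1)] assms(2,3) by simp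
  have "p + (h1,h2) \<in> open_segment p (p + (2*h1,2*h2))"
    unfolding in_segment
  proof (intro conjI exI)
    show "p \<noteq> p + (2*h1, 2*h2)" using assms(4) by (auto simp: prod_eq_iff)
    show "p + (h1, h2) = (1 - 1/2) *\<^sub>R p + (1/2::real) *\<^sub>R (p + (2*h1, 2*h2))"
      by (simp add: prod_eq_iff algebra_simps)
  qed auto
  then show False using e assms(1) q unfolding extreme_point_of_def by blast
qed

lemma np_vertex:
  assumes "is_vertex c P"
  obtains i j where "c i j \<noteq> 0" "P = (real i, real j)"
proof -
  have e: "P extreme_point_of newton_polygon c" using assms by (simp add: is_vertex_def)
  then have "P \<in> supp_set c" unfolding np_def' by (rule extreme_point_of_convex_hull)
  then obtain i j where ij: "c i j \<noteq> 0" "real i \<le> fst P" "real j \<le> snd P"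
    unfolding supp_set_iff by blast
  have "P = (real i, real j) + (fst P - real i, snd P - real j)" by simp
  then have "(fst P - real i, snd P - real j) = (0,0)"
    using np_notext_up[OF np_supp[of c i j, OF ij(1)], of "fst P - real i" "snd P - real j"] ij e by auto
  then have "P = (real i, real j)" by (auto simp: prod_eq_iff)
  then show ?thesis using that ij(1) by blast
qed


lemma lev_face:
  assumes wa: "wa > 0" and wb: "wb > 0" and c: "lev wa wb c L x1 y1 x2 y2"
  shows "newton_polygon c \<subseteq> face (real wa) (real wb) (real L) 1 0 {real x1..real x2}"
proof (rule np_subset[OF convex_face])
  show "convex {real x1..real x2}" by simp
  fix i j x y assume ij: "c i j \<noteq> 0" and xy: "real i \<le> x" "real j \<le> y"
  have c1: "L \<le> wa*i + wb*j" and c2: "wa*i + wb*j = L \<Longrightarrow> x1 \<le> i \<and> i \<le> x2"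
    using c ij unfolding lev_def by auto
  have "real wa * real i \<le> real wa * x" "real wb * real j \<le> real wb * y"
    using xy by (auto intro: mult_left_mono)
  moreover have "real L \<le> real wa * real i + real wb * real j" using c1 by (metis of_nat_add of_nat_le_iff of_nat_mult)
  ultimately have A: "real L \<le> real wa * x + real wb * y" by linarith
  have B: "x \<in> {real x1..real x2}" if e: "real wa * x + real wb * y = real L"
  proof -
    have "real wa * (x - real i) + real wb * (y - real j) = real L - (real wa * real i + real wb * real j)"
      using e by (simp add: algebra_simps)
    moreover have "real wa * (x - real i) \<ge> 0" "real wb * (y - real j) \<ge> 0" using xy by auto
    ultimately have "real wa * (x - real i) = 0" "real L = real wa * real i + real wb * real j"
      using \<open>real L \<le> real wa * real i + real wb * real j\<close> by linarith+
    then have "x = real i" "wa*i + wb*j = L" using wa by (simp, metis of_nat_add of_nat_eq_iff of_nat_mult)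
    then show ?thesis using c2 by auto
  qed
  show "(x, y) \<in> face (real wa) (real wb) (real L) 1 0 {real x1..real x2}"
    unfolding face_def using A B by auto
qed

lemma lev_next_vertex:
  assumes wa: "wa > 0" and wb: "wb > 0" and c: "lev wa wb c L x1 y1 x2 y2" and x12: "x1 < x2"
  shows "next_vertex c (real x1, real y1) (real x2, real y2)"
proof -
  let ?N = "newton_polygon c"
  let ?P = "(real x1, real y1)" and ?Q = "(real x2, real y2)"
  have F: "?N \<subseteq> face (real wa) (real wb) (real L) 1 0 {real x1..real x2}" by (rule lev_face[OF wa wb c])
  have c3: "wa*x1 + wb*y1 = L" "wa*x2 + wb*y2 = L" "c x1 y1 \<noteq> 0" "c x2 y2 \<noteq> 0"
    using c unfolding lev_def by auto
  have PN: "?P \<in> ?N" and QN: "?Q \<in> ?N" using np_supp c3 by auto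
  have fP: "real wa * fst ?P + real wb * snd ?P = real L" using c3(1) by (simp, metis of_nat_add of_nat_mult)
  have fQ: "real wa * fst ?Q + real wb * snd ?Q = real L" using c3(2) by (simp, metis of_nat_add of_nat_mult)
  have eP: "?P extreme_point_of ?N"
  proof (rule ext_face[OF _ PN fP])
    show "?N \<subseteq> face (real wa) (real wb) (real L) 1 0 {1 * fst ?P + 0 * snd ?P..}"
      using F by (auto simp: face_def)
    show "real wa * 0 \<noteq> real wb * 1" using wb by simp
  qed
  have eQ: "?Q extreme_point_of ?N"
  proof (rule ext_face[OF _ QN fQ])
    show "?N \<subseteq> face (real wa) (real wb) (real L) (-1) 0 {(-1) * fst ?Q + 0 * snd ?Q..}"
      using F by (auto simp: face_def)
    show "real wa * 0 \<noteq> real wb * (-1)" using wb by simp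
  qed
  have min: "real x2 \<le> fst R" if R: "is_vertex c R" "real x1 < fst R" for R
  proof (rule ccontr)
    assume "\<not> real x2 \<le> fst R"
    then have Rx: "fst R < real x2" by simp
    have eR: "R extreme_point_of ?N" using R(1) by (simp add: is_vertex_def)
    then have RN: "R \<in> ?N" by (simp add: extreme_point_of_def)
    define t where "t = (fst R - real x1) / (real x2 - real x1)"
    have t: "0 < t" "t < 1" using R(2) Rx x12 by (auto simp: t_def field_simps)
    define S where "S = (1 - t) *\<^sub>R ?P + t *\<^sub>R ?Q"
    have cv: "\<forall>x\<in>?N. \<forall>y\<in>?N. \<forall>u. 0 \<le> u \<and> u \<le> 1 \<longrightarrow> (1 - u) *\<^sub>R x + u *\<^sub>R y \<in> ?N"
      using np_convex[of c] unfolding convex_alt by blast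
    have SN: "S \<in> ?N" unfolding S_def using cv PN QN t by (meson less_imp_le)
    have d: "real x2 - real x1 \<noteq> 0" using x12 by simp
    have td: "t * (real x2 - real x1) = fst R - real x1" unfolding t_def using d by simp
    have "fst S = real x1 + t * (real x2 - real x1)" by (simp add: S_def algebra_simps)
    then have Sx: "fst S = fst R" using td by simp
    have fS: "real wa * fst S + real wb * snd S = real L"
    proof -
      have "real wa * fst S + real wb * snd S = (1-t) * (real wa * fst ?P + real wb * snd ?P) + t * (real wa * fst ?Q + real wb * snd ?Q)"
        by (simp add: S_def algebra_simps)
      also have "\<dots> = (1-t) * real L + t * real L" using fP fQ by simp
      finally show ?thesis by (simp add: algebra_simps)
    qed
    have "real L \<le> real wa * fst R + real wb * snd R" using F RN by (auto simp: face_def)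
    moreover have "real wa * fst S = real wa * fst R" using Sx by simp
    ultimately have "real wb * snd S \<le> real wb * snd R" using fS by linarith
    then have le: "snd S \<le> snd R" using wb by simp
    show False
    proof (cases "snd S = snd R")
      case True
      then have "R = S" using Sx by (simp add: prod_eq_iff)
      moreover have "S \<in> open_segment ?P ?Q" unfolding in_segment S_def using t x12 by auto
      ultimately show False using eR PN QN unfolding extreme_point_of_def by blast
    next
      case False
      then have "R = S + (0, snd R - snd S)" using Sx by (simp add: prod_eq_iff)
      then show False using np_notext_up[OF SN, of 0 "snd R - snd S"] le False eR by auto
    qed
  qed
  show ?thesis unfolding next_vertex_def is_vertex_def using eP eQ x12 min
    by (auto simp: is_vertex_def)
qed


lemma seg_point:
  fixes A B :: "real\<times>real"
  assumes "fst A < X" "X \<le> fst B"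
  obtains t where "0 < t" "t \<le> 1" "fst ((1 - t) *\<^sub>R A + t *\<^sub>R B) = X" "X < fst B \<Longrightarrow> t < 1"
proof -
  define t where "t = (X - fst A) / (fst B - fst A)"
  have d: "fst B - fst A > 0" using assms by simp
  have td: "t * (fst B - fst A) = X - fst A" unfolding t_def using d by simp
  have "fst ((1 - t) *\<^sub>R A + t *\<^sub>R B) = fst A + t * (fst B - fst A)" by (simp add: algebra_simps)
  then have "fst ((1 - t) *\<^sub>R A + t *\<^sub>R B) = X" using td by simp
  moreover have "0 < t" "t \<le> 1" "X < fst B \<Longrightarrow> t < 1" using assms d by (auto simp: t_def field_simps)
  ultimately show ?thesis using that by blast
qed

lemma lin_comb: "a * fst ((1 - t) *\<^sub>R A + t *\<^sub>R B) + b * snd ((1 - t) *\<^sub>R A + t *\<^sub>R B)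
   = (1-t) * (a * fst A + b * snd A) + t * (a * fst B + b * snd B)"
  by (simp add: algebra_simps)

lemma np_comb: "A \<in> newton_polygon c \<Longrightarrow> B \<in> newton_polygon c \<Longrightarrow> 0 \<le> t \<Longrightarrow> t \<le> 1 \<Longrightarrow>
  (1 - t) *\<^sub>R A + t *\<^sub>R B \<in> newton_polygon c"
  using np_convex[of c] unfolding convex_alt by blast

lemma b_geometry:
  fixes b :: "nat \<Rightarrow> nat \<Rightarrow> complex"
  assumes q_nonzero: "\<exists>i j. b i j \<noteq> 0"
    and v1: "is_vertex b (real n1, real m1)"
    and v1_first: "\<forall>R. is_vertex b R \<longrightarrow> real n1 \<le> fst R"
    and v2: "next_vertex b (real n1, real m1) (real n2, real m2)"
  shows "n1 < n2" "m2 < m1" "b n1 m1 \<noteq> 0" "b n2 m2 \<noteq> 0"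
    "\<forall>i j. b i j \<noteq> 0 \<longrightarrow> n1 \<le> i"
    "\<forall>i j. b i j \<noteq> 0 \<longrightarrow> (m1-m2)*n1 + (n2-n1)*m1 \<le> (m1-m2)*i + (n2-n1)*j"
    "\<forall>i j. b i j \<noteq> 0 \<and> (m1-m2)*i + (n2-n1)*j = (m1-m2)*n1 + (n2-n1)*m1 \<longrightarrow> i \<le> n2"
proof -
  let ?N = "newton_polygon b"
  have v2': "is_vertex b (real n2, real m2)" "real n1 < real n2"
    and v2min: "\<And>R. is_vertex b R \<Longrightarrow> real n1 < fst R \<Longrightarrow> real n2 \<le> fst R"
    using v2 unfolding next_vertex_def by auto
  show n12: "n1 < n2" using v2' by simp
  obtain i j where "b i j \<noteq> 0" "(real n1, real m1) = (real i, real j)" using np_vertex[OF v1] by blast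
  then show b1: "b n1 m1 \<noteq> 0" by simp
  obtain i j where "b i j \<noteq> 0" "(real n2, real m2) = (real i, real j)" using np_vertex[OF v2'(1)] by blast
  then show b2: "b n2 m2 \<noteq> 0" by simp
  have V1N: "(real n1, real m1) \<in> ?N" and V2N: "(real n2, real m2) \<in> ?N" using np_supp b1 b2 by auto
  have e1: "(real n1, real m1) extreme_point_of ?N" and e2: "(real n2, real m2) extreme_point_of ?N"
    using v1 v2'(1) by (auto simp: is_vertex_def)
  show m12: "m2 < m1"
  proof (rule ccontr)
    assume "\<not> m2 < m1"
    then have "(real n2, real m2) = (real n1, real m1) + (real n2 - real n1, real m2 - real m1)"
      "real n2 - real n1 \<ge> 0" "real m2 - real m1 \<ge> 0" "(real n2 - real n1, real m2 - real m1) \<noteq> (0,0)"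
      using n12 by auto
    then show False using np_notext_up[OF V1N, of "real n2 - real n1" "real m2 - real m1"] e2 by simp
  qed
  show lft: "\<forall>i j. b i j \<noteq> 0 \<longrightarrow> n1 \<le> i"
  proof (intro allI impI)
    fix i j assume ij: "b i j \<noteq> 0"
    define i0 where "i0 = (LEAST i. \<exists>j. b i j \<noteq> 0)"
    have i0: "\<exists>j. b i0 j \<noteq> 0" "\<And>i j. b i j \<noteq> 0 \<Longrightarrow> i0 \<le> i"
      using LeastI_ex[of "\<lambda>i. \<exists>j. b i j \<noteq> 0"] q_nonzero Least_le[of "\<lambda>i. \<exists>j. b i j \<noteq> 0"]
      unfolding i0_def by blast+
    define j0 where "j0 = (LEAST j. b i0 j \<noteq> 0)"
    have j0: "b i0 j0 \<noteq> 0" "\<And>j. b i0 j \<noteq> 0 \<Longrightarrow> j0 \<le> j"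
      using LeastI_ex[of "\<lambda>j. b i0 j \<noteq> 0"] i0(1) Least_le[of "\<lambda>j. b i0 j \<noteq> 0"]
      unfolding j0_def by blast+
    have F: "?N \<subseteq> face 1 0 (real i0) 0 1 {real j0..}"
    proof (rule np_subset[OF convex_face])
      show "convex {real j0..}" by simp
      fix i j x y assume h: "b i j \<noteq> 0" "real i \<le> x" "real j \<le> y"
      have "real i0 \<le> real i" using i0(2)[OF h(1)] by simp
      moreover have "x = real i0 \<Longrightarrow> real j0 \<le> y"
      proof -
        assume "x = real i0"
        then have "i = i0" using h(2) i0(2)[OF h(1)] by simp
        then show "real j0 \<le> y" using j0(2) h by fastforce
      qed
      ultimately show "(x, y) \<in> face 1 0 (real i0) 0 1 {real j0..}" using h unfolding face_def by auto
    qed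
    have "(real i0, real j0) extreme_point_of ?N"
    proof (rule ext_face[where \<alpha>=1 and \<beta>=0 and A="real i0" and \<gamma>=0 and \<delta>=1])
      show "?N \<subseteq> face 1 0 (real i0) 0 1 {0 * fst (real i0, real j0) + 1 * snd (real i0, real j0)..}"
        using F by simp
    qed (use np_supp[of b i0 j0, OF j0(1)] in auto)
    then have "real n1 \<le> real i0" using v1_first by (auto simp: is_vertex_def)
    then show "n1 \<le> i" using i0(2)[OF ij] by simp
  qed
  define wa where "wa = m1 - m2"
  define wb where "wb = n2 - n1"
  define K where "K = wa*n1 + wb*m1"
  have wa: "wa > 0" and wb: "wb > 0" using n12 m12 by (auto simp: wa_def wb_def)
  have K2: "K = wa*n2 + wb*m2" using n12 m12 unfolding K_def wa_def wb_def
    by (simp add: diff_mult_distrib diff_mult_distrib2 algebra_simps)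
  have rwa: "real wa = real m1 - real m2" and rwb: "real wb = real n2 - real n1"
    using n12 m12 by (auto simp: wa_def wb_def)
  have fV1: "real wa * real n1 + real wb * real m1 = real K" by (simp add: K_def)
  have fV2: "real wa * real n2 + real wb * real m2 = real K" using K2 by simp
  have phi: "\<forall>i j. b i j \<noteq> 0 \<longrightarrow> K \<le> wa*i + wb*j"
  proof (rule ccontr)
    assume "\<not> (\<forall>i j. b i j \<noteq> 0 \<longrightarrow> K \<le> wa*i + wb*j)"
    then obtain i' j' where ij': "b i' j' \<noteq> 0" "wa*i' + wb*j' < K" by (auto simp: not_le)
    define ms where "ms = (LEAST m. \<exists>i j. b i j \<noteq> 0 \<and> wa*i + wb*j = m)"
    have ms: "\<exists>i j. b i j \<noteq> 0 \<and> wa*i + wb*j = ms" "\<And>i j. b i j \<noteq> 0 \<Longrightarrow> ms \<le> wa*i + wb*j"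
      using LeastI_ex[of "\<lambda>m. \<exists>i j. b i j \<noteq> 0 \<and> wa*i + wb*j = m"] ij'(1)
        Least_le[of "\<lambda>m. \<exists>i j. b i j \<noteq> 0 \<and> wa*i + wb*j = m"]
      unfolding ms_def by blast+
    have msK: "ms < K" using ms(2)[OF ij'(1)] ij'(2) by simp
    define i1 where "i1 = (LEAST i. \<exists>j. b i j \<noteq> 0 \<and> wa*i + wb*j = ms)"
    have i1: "\<exists>j. b i1 j \<noteq> 0 \<and> wa*i1 + wb*j = ms" "\<And>i j. b i j \<noteq> 0 \<Longrightarrow> wa*i + wb*j = ms \<Longrightarrow> i1 \<le> i"
      using LeastI_ex[of "\<lambda>i. \<exists>j. b i j \<noteq> 0 \<and> wa*i + wb*j = ms"] ms(1)
        Least_le[of "\<lambda>i. \<exists>j. b i j \<noteq> 0 \<and> wa*i + wb*j = ms"]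
      unfolding i1_def by blast+
    obtain j1 where j1: "b i1 j1 \<noteq> 0" "wa*i1 + wb*j1 = ms" using i1(1) by blast
    have F: "?N \<subseteq> face (real wa) (real wb) (real ms) 1 0 {real i1..}"
    proof (rule np_subset[OF convex_face])
      show "convex {real i1..}" by simp
      fix i j x y assume h: "b i j \<noteq> 0" "real i \<le> x" "real j \<le> y"
      have m: "real ms \<le> real wa * real i + real wb * real j" using ms(2)[OF h(1)]
        by (metis of_nat_add of_nat_le_iff of_nat_mult)
      have "real wa * real i \<le> real wa * x" "real wb * real j \<le> real wb * y" using h by (auto intro: mult_left_mono)
      then have A: "real ms \<le> real wa * x + real wb * y" using m by linarith
      have B: "1 * x + 0 * y \<in> {real i1..}" if e: "real wa * x + real wb * y = real ms"
      proof -
        have "real wa * (x - real i) \<ge> 0" "real wb * (y - real j) \<ge> 0" using h by auto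
        moreover have "real wa * (x - real i) + real wb * (y - real j) = real ms - (real wa * real i + real wb * real j)"
          using e by (simp add: algebra_simps)
        ultimately have "real wa * (x - real i) = 0" "real ms = real wa * real i + real wb * real j" using m by linarith+
        then have "x = real i" "wa*i + wb*j = ms" using wa by (simp, metis of_nat_add of_nat_eq_iff of_nat_mult)
        then show ?thesis using i1(2)[OF h(1)] by simp
      qed
      show "(x, y) \<in> face (real wa) (real wb) (real ms) 1 0 {real i1..}" unfolding face_def using A B by auto
    qed
    have "(real i1, real j1) extreme_point_of ?N"
    proof (rule ext_face)
      show "?N \<subseteq> face (real wa) (real wb) (real ms) 1 0 {1 * fst (real i1, real j1) + 0 * snd (real i1, real j1)..}"
        using F by simp
      show "(real i1, real j1) \<in> ?N" using np_supp[of b i1 j1, OF j1(1)] .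
      show "real wa * fst (real i1, real j1) + real wb * snd (real i1, real j1) = real ms"
        using j1(2) by (simp, metis of_nat_add of_nat_mult)
      show "real wa * 0 \<noteq> real wb * 1" using wb by simp
    qed
    then have vi1: "is_vertex b (real i1, real j1)" by (simp add: is_vertex_def)
    then have "n1 \<le> i1" using v1_first by fastforce
    have W1N: "(real i1, real j1) \<in> ?N" using np_supp[of b i1 j1, OF j1(1)] .
    show False
    proof (cases "i1 = n1")
      case True
      then have "wa*n1 + wb*j1 = ms" using j1(2) by simp
      then have "wb*j1 < wb*m1" using msK K_def by linarith
      then have "j1 < m1" by simp
      then have "(real n1, real m1) = (real i1, real j1) + (0, real m1 - real j1)" using True by simp
      then show False using np_notext_up[OF W1N, of 0 "real m1 - real j1"] \<open>j1 < m1\<close> e1 by simp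
    next
      case False
      then have "n1 < i1" using \<open>n1 \<le> i1\<close> by simp
      then have "real n2 \<le> real i1" using v2min[OF vi1] by simp
      then obtain t where t: "0 < t" "t \<le> 1"
          "fst ((1 - t) *\<^sub>R (real n1, real m1) + t *\<^sub>R (real i1, real j1)) = real n2"
        using seg_point[of "(real n1, real m1)" "real n2" "(real i1, real j1)"] n12 by auto
      define S where "S = (1 - t) *\<^sub>R (real n1, real m1) + t *\<^sub>R (real i1, real j1)"
      have SN: "S \<in> ?N" unfolding S_def by (rule np_comb[OF V1N W1N]) (use t in auto)
      have fS: "real wa * fst S + real wb * snd S = (1-t) * real K + t * real ms"
        unfolding S_def lin_comb using fV1 j1(2) by (simp, metis of_nat_add of_nat_mult)
      have "t * real ms < t * real K" using msK t by simp
      then have "real wa * fst S + real wb * snd S < real K" using fS by (simp add: algebra_simps)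
      then have "real wb * snd S < real wb * real m2" using fV2 t(3) S_def by simp
      then have lt: "snd S < real m2" using wb by simp
      have "(real n2, real m2) = S + (0, real m2 - snd S)" using t(3) S_def by (simp add: prod_eq_iff)
      then show False using np_notext_up[OF SN, of 0 "real m2 - snd S"] lt e2 by simp
    qed
  qed
  show "\<forall>i j. b i j \<noteq> 0 \<longrightarrow> (m1-m2)*n1 + (n2-n1)*m1 \<le> (m1-m2)*i + (n2-n1)*j"
    using phi unfolding K_def wa_def wb_def .
  have "\<forall>i j. b i j \<noteq> 0 \<and> wa*i + wb*j = K \<longrightarrow> i \<le> n2"
  proof (intro allI impI, rule ccontr)
    fix i j assume h: "b i j \<noteq> 0 \<and> wa*i + wb*j = K" and "\<not> i \<le> n2"
    then have in2: "n2 < i" by simp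
    have WN: "(real i, real j) \<in> ?N" using np_supp[of b i j] h by simp
    obtain t where t: "0 < t" "t \<le> 1" "fst ((1 - t) *\<^sub>R (real n1, real m1) + t *\<^sub>R (real i, real j)) = real n2" "t < 1"
      using seg_point[of "(real n1, real m1)" "real n2" "(real i, real j)"] n12 in2 by auto
    define S where "S = (1 - t) *\<^sub>R (real n1, real m1) + t *\<^sub>R (real i, real j)"
    have fS: "real wa * fst S + real wb * snd S = (1-t) * real K + t * real K"
      unfolding S_def lin_comb using fV1 h by (simp, metis of_nat_add of_nat_mult)
    have Sx: "fst S = real n2" using t(3) S_def by simp
    have "real wa * fst S + real wb * snd S = real K" using fS by (simp add: algebra_simps)
    then have "real wa * real n2 + real wb * snd S = real K" using Sx by simp
    then have "real wb * snd S = real wb * real m2" using fV2 by linarith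
    then have "snd S = real m2" using wb by simp
    then have "S = (real n2, real m2)" using Sx by (simp add: prod_eq_iff)
    moreover have "S \<in> open_segment (real n1, real m1) (real i, real j)"
      unfolding in_segment S_def using t in2 n12 by auto
    ultimately show False using e2 V1N WN unfolding extreme_point_of_def by blast
  qed
  then show "\<forall>i j. b i j \<noteq> 0 \<and> (m1-m2)*i + (n2-n1)*j = (m1-m2)*n1 + (n2-n1)*m1 \<longrightarrow> i \<le> n2"
    unfolding K_def wa_def wb_def .
qed


lemma tm_nc_eq: "tm (nc c) \<rho> \<rho> (i,j) = norm (c i j) * \<rho> ^ (i + j)"
  by (simp add: tm_def nc_def power_add)

lemma amaj_mono:
  assumes "amaj c \<rho>0" "0 \<le> \<rho>" "\<rho> \<le> \<rho>0"
  shows "amaj c \<rho>" "Mj c \<rho> \<le> Mj c \<rho>0"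
proof -
  have le: "\<And>p. tm (nc c) \<rho> \<rho> p \<le> tm (nc c) \<rho>0 \<rho>0 p"
  proof -
    fix p :: "nat\<times>nat" obtain i j where p: "p = (i,j)" by fastforce
    show "tm (nc c) \<rho> \<rho> p \<le> tm (nc c) \<rho>0 \<rho>0 p"
      unfolding p tm_nc_eq using assms(2,3) by (intro mult_left_mono power_mono) auto
  qed
  show 1: "amaj c \<rho>" unfolding amaj_def
    by (rule summable_on_comparison_test[of "tm (nc c) \<rho>0 \<rho>0"]) (use assms(1) le tm_nc_nonneg assms(2) in \<open>auto simp: amaj_def\<close>)
  show "Mj c \<rho> \<le> Mj c \<rho>0" unfolding Mj_def
    by (rule infsum_mono) (use 1 assms(1) le in \<open>auto simp: amaj_def\<close>)
qed

lemma shrink: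
  assumes r0: "\<rho>0 > 0" and a: "amaj c \<rho>0" and c0: "c 0 0 = 0" and r: "0 < \<rho>" "\<rho> \<le> \<rho>0"
  shows "Mj c \<rho> \<le> \<rho> / \<rho>0 * Mj c \<rho>0"
proof -
  have le: "\<And>p. tm (nc c) \<rho> \<rho> p \<le> \<rho> / \<rho>0 * tm (nc c) \<rho>0 \<rho>0 p"
  proof -
    fix p :: "nat\<times>nat" obtain i j where p: "p = (i,j)" by fastforce
    show "tm (nc c) \<rho> \<rho> p \<le> \<rho> / \<rho>0 * tm (nc c) \<rho>0 \<rho>0 p"
    proof (cases "i + j = 0")
      case True then show ?thesis using c0 by (simp add: p tm_nc_eq)
    next
      case False
      define s where "s = \<rho> / \<rho>0"
      have s: "0 \<le> s" "s \<le> 1" using r r0 by (auto simp: s_def)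
      have "\<rho> = s * \<rho>0" using r0 by (simp add: s_def)
      then have "\<rho> ^ (i+j) = s ^ (i+j) * \<rho>0 ^ (i+j)" by (simp add: power_mult_distrib)
      also have "\<dots> \<le> s ^ 1 * \<rho>0 ^ (i+j)"
        using power_decreasing[of 1 "i+j" s] False s r0 by (intro mult_right_mono) auto
      finally have "\<rho> ^ (i+j) \<le> s * \<rho>0 ^ (i+j)" by simp
      then have "norm (c i j) * \<rho> ^ (i+j) \<le> norm (c i j) * (s * \<rho>0 ^ (i+j))"
        by (rule mult_left_mono) simp
      then show ?thesis unfolding p tm_nc_eq s_def by (simp add: algebra_simps)
    qed
  qed
  have s1: "tm (nc c) \<rho> \<rho> summable_on UNIV" using amaj_mono(1)[OF a] r by (simp add: amaj_def)
  have s2: "(\<lambda>p. \<rho> / \<rho>0 * tm (nc c) \<rho>0 \<rho>0 p) summable_on UNIV"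
    using a by (intro summable_on_cmult_right) (simp add: amaj_def)
  have "Mj c \<rho> \<le> infsum (\<lambda>p. \<rho> / \<rho>0 * tm (nc c) \<rho>0 \<rho>0 p) UNIV"
    unfolding Mj_def by (rule infsum_mono[OF s1 s2 le])
  also have "\<dots> = \<rho> / \<rho>0 * Mj c \<rho>0" unfolding Mj_def by (rule infsum_cmult_right')
  finally show ?thesis .
qed

lemma small:
  assumes r0: "\<rho>0 > 0" and a: "amaj c \<rho>0" and c0: "c 0 0 = 0" and R: "R > 0"
  shows "\<exists>\<rho>>0. \<rho> \<le> \<rho>0 \<and> amaj c \<rho> \<and> Mj c \<rho> \<le> R"
proof -
  define M where "M = Mj c \<rho>0"
  have M: "M \<ge> 0" using Mj_nonneg r0 by (simp add: M_def)
  define \<rho> where "\<rho> = \<rho>0 * R / (M + R)"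
  have r: "0 < \<rho>" "\<rho> \<le> \<rho>0" using r0 R M by (auto simp: \<rho>_def field_simps)
  have "Mj c \<rho> \<le> \<rho> / \<rho>0 * M" using shrink[OF r0 a c0 r] by (simp add: M_def)
  also have "\<rho> / \<rho>0 * M = R * M / (M + R)" using r0 by (simp add: \<rho>_def)
  also have "\<dots> \<le> R" using M R by (simp add: field_simps)
  finally show ?thesis using r amaj_mono(1)[OF a] by auto
qed

lemma Qstep:
  assumes Rq: "Rq > 0" "amaj b Rq" "\<And>u v. norm u \<le> Rq \<Longrightarrow> norm v \<le> Rq \<Longrightarrow> q u v = ev b u v"
    and P: "\<rho>1 > 0" "amaj Pc \<rho>1" "\<And>z w. norm z \<le> \<rho>1 \<Longrightarrow> norm w \<le> \<rho>1 \<Longrightarrow> P z = ev Pc z w" "Pc 0 0 = 0"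
    and Q: "\<rho>2 > 0" "amaj Qc \<rho>2" "\<And>z w. norm z \<le> \<rho>2 \<Longrightarrow> norm w \<le> \<rho>2 \<Longrightarrow> Q z w = ev Qc z w" "Qc 0 0 = 0"
  shows "\<exists>\<rho>>0. amaj (cmp2 b Pc Qc) \<rho> \<and>
    (\<forall>z w. norm z \<le> \<rho> \<longrightarrow> norm w \<le> \<rho> \<longrightarrow> q (P z) (Q z w) = ev (cmp2 b Pc Qc) z w)"
proof -
  define \<rho>a where "\<rho>a = min \<rho>1 \<rho>2"
  have ra: "\<rho>a > 0" "\<rho>a \<le> \<rho>1" "\<rho>a \<le> \<rho>2" using P Q by (auto simp: \<rho>a_def)
  have Pa: "amaj Pc \<rho>a" using amaj_mono(1)[OF P(2)] ra by simp
  have Qa: "amaj Qc \<rho>a" using amaj_mono(1)[OF Q(2)] ra by simp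
  obtain \<rho>b where rb: "\<rho>b > 0" "\<rho>b \<le> \<rho>a" "amaj Pc \<rho>b" "Mj Pc \<rho>b \<le> Rq"
    using small[OF ra(1) Pa P(4) Rq(1)] by blast
  have Qb: "amaj Qc \<rho>b" using amaj_mono(1)[OF Qa] rb by simp
  obtain \<rho> where r: "\<rho> > 0" "\<rho> \<le> \<rho>b" "amaj Qc \<rho>" "Mj Qc \<rho> \<le> Rq"
    using small[OF rb(1) Qb Q(4) Rq(1)] by blast
  have Pr1: "amaj Pc \<rho>" using amaj_mono(1)[OF rb(3)] r by simp
  have "Mj Pc \<rho> \<le> Mj Pc \<rho>b" using amaj_mono(2)[OF rb(3), of \<rho>] r by simp
  then have Pr: "amaj Pc \<rho>" "Mj Pc \<rho> \<le> Rq" using Pr1 rb(4) by auto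
  note C = comp_lemma[OF r(1) Pr(1) r(3) Rq(2) Pr(2) r(4)]
  have "\<forall>z w. norm z \<le> \<rho> \<longrightarrow> norm w \<le> \<rho> \<longrightarrow> q (P z) (Q z w) = ev (cmp2 b Pc Qc) z w"
  proof (intro allI impI)
    fix z w :: complex assume z: "norm z \<le> \<rho>" and w: "norm w \<le> \<rho>"
    have "P z = ev Pc z w" using P(3) z w r rb ra by auto
    moreover have "Q z w = ev Qc z w" using Q(3) z w r rb ra by auto
    moreover have "norm (ev Pc z w) \<le> Rq" using amaj_tm(3)[OF _ Pr(1) z w] r Pr(2) by auto
    moreover have "norm (ev Qc z w) \<le> Rq" using amaj_tm(3)[OF _ r(3) z w] r by auto
    ultimately show "q (P z) (Q z w) = ev (cmp2 b Pc Qc) z w" using Rq(3) C(3)[OF z w] by simp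
  qed
  then show ?thesis using C(1) r(1) by blast
qed


definition idz :: "nat \<Rightarrow> nat \<Rightarrow> complex" where
  "idz k l = (if k = 1 \<and> l = 0 then 1 else 0)"

lemma idz_props: "amaj idz 1" "ev idz z w = z"
proof -
  have a: "\<And>p. p \<notin> {(1,0)} \<Longrightarrow> tm (nc idz) 1 1 p = 0" "\<And>p. p \<notin> {(1,0)} \<Longrightarrow> tm idz z w p = 0"
    by (auto simp: tm_def nc_def idz_def case_prod_unfold)
  show "amaj idz 1" unfolding amaj_def using fin_supp(1)[of "{(1,0)}" "tm (nc idz) 1 1", OF _ a(1)] by simp
  show "ev idz z w = z" unfolding ev_def using fin_supp(2)[of "{(1,0)}" "tm idz z w", OF _ a(2)]
    by (simp add: tm_def idz_def)
qed

lemma idz_lev: "wa > 0 \<Longrightarrow> lev wa wb idz wa 1 0 1 0"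
  unfolding lev_def idz_def by auto

lemma lev_c00: "lev wa wb c L x1 y1 x2 y2 \<Longrightarrow> L > 0 \<Longrightarrow> c 0 0 = 0"
  unfolding lev_def by force

lemma EP:
  assumes Rp: "Rp > 0" "amaj (lift1 a) Rp" "\<And>z w. norm z \<le> Rp \<Longrightarrow> p z = ev (lift1 a) z w"
    and \<delta>: "\<delta> \<ge> 1" and a_low: "\<forall>i<\<delta>. a i = 0" and a_lead: "a \<delta> \<noteq> 0" and wa: "wa > 0" and wb: "wb > 0"
  shows "\<exists>\<rho> Pc. \<rho> > 0 \<and> amaj Pc \<rho> \<and> (\<forall>z w. norm z \<le> \<rho> \<longrightarrow> norm w \<le> \<rho> \<longrightarrow> (p^^n) z = ev Pc z w)
     \<and> lev wa wb Pc (wa*\<delta>^n) (\<delta>^n) 0 (\<delta>^n) 0"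
proof (induction n)
  case 0
  have "\<forall>z w. norm z \<le> 1 \<longrightarrow> norm w \<le> 1 \<longrightarrow> (p^^0) z = ev idz z w" using idz_props(2) by simp
  then show ?case using idz_props(1) idz_lev[OF wa, of wb] by (intro exI[of _ 1] exI[of _ idz]) simp
next
  case (Suc n)
  then obtain \<rho> Pc where H: "\<rho> > 0" "amaj Pc \<rho>" "\<forall>z w. norm z \<le> \<rho> \<longrightarrow> norm w \<le> \<rho> \<longrightarrow> (p^^n) z = ev Pc z w"
    "lev wa wb Pc (wa*\<delta>^n) (\<delta>^n) 0 (\<delta>^n) 0" by blast
  have LP: "wa*\<delta>^n > 0" using wa \<delta> by simp
  have P00: "Pc 0 0 = 0" using lev_c00[OF H(4) LP] .
  have Rp3: "\<And>u v. norm u \<le> Rp \<Longrightarrow> norm v \<le> Rp \<Longrightarrow> (\<lambda>u v. p u) u v = ev (lift1 a) u v"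
    using Rp(3) by simp
  have H3: "\<And>z w. norm z \<le> \<rho> \<Longrightarrow> norm w \<le> \<rho> \<Longrightarrow> (p^^n) z = ev Pc z w" using H(3) by blast
  have H3': "\<And>z w. norm z \<le> \<rho> \<Longrightarrow> norm w \<le> \<rho> \<Longrightarrow> (\<lambda>z w. (p^^n) z) z w = ev Pc z w" using H(3) by blast
  obtain \<rho>' where S: "\<rho>' > 0" "amaj (cmp2 (lift1 a) Pc Pc) \<rho>'"
    "\<forall>z w. norm z \<le> \<rho>' \<longrightarrow> norm w \<le> \<rho>' \<longrightarrow> (\<lambda>u v. p u) ((p^^n) z) ((\<lambda>z w. (p^^n) z) z w) = ev (cmp2 (lift1 a) Pc Pc) z w"
    using Qstep[OF Rp(1,2) Rp3 H(1,2) H3 P00 H(1,2) H3' P00] by blast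
  have la: "\<And>i j. lift1 a i j \<noteq> 0 \<Longrightarrow> j = 0 \<and> \<delta> \<le> i"
  proof -
    fix i j assume h: "lift1 a i j \<noteq> 0"
    then have "j = 0" "a i \<noteq> 0" by (auto simp: lift1_def split: if_splits)
    then show "j = 0 \<and> \<delta> \<le> i" using a_low not_le by blast
  qed
  have eqd: "\<And>i j. lift1 a i j \<noteq> 0 \<Longrightarrow> i*(wa*\<delta>^n) + j*(wa*\<delta>^n) = wa*\<delta>^Suc n \<Longrightarrow> i = \<delta> \<and> j = 0"
  proof -
    fix i j assume h: "lift1 a i j \<noteq> 0" "i*(wa*\<delta>^n) + j*(wa*\<delta>^n) = wa*\<delta>^Suc n"
    then have "j = 0" using la by blast
    then have "i*(wa*\<delta>^n) = \<delta>*(wa*\<delta>^n)" using h(2) by (simp add: algebra_simps)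
    then have "i = \<delta>" using LP mult_right_cancel[of "wa*\<delta>^n" i \<delta>] by simp
    then show "i = \<delta> \<and> j = 0" using \<open>j = 0\<close> by simp
  qed
  have lev: "lev wa wb (cmp2 (lift1 a) Pc Pc) (wa*\<delta>^Suc n) (\<delta>^Suc n) 0 (\<delta>^Suc n) 0"
  proof (rule comp_lev[OF wb H(4) H(4), where ?i0.0=\<delta> and ?j0.0=0 and ?i1.0=\<delta> and ?j1.0=0])
    show "\<And>i j. lift1 a i j \<noteq> 0 \<Longrightarrow> wa*\<delta>^Suc n \<le> i*(wa*\<delta>^n) + j*(wa*\<delta>^n)"
    proof -
      fix i j assume "lift1 a i j \<noteq> 0"
      then have ij: "j = 0" "\<delta> \<le> i" using la by auto
      have "\<delta>*(wa*\<delta>^n) \<le> i*(wa*\<delta>^n)" using ij(2) by (rule mult_right_mono) simp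
      then show "wa*\<delta>^Suc n \<le> i*(wa*\<delta>^n) + j*(wa*\<delta>^n)" using ij by (simp add: algebra_simps)
    qed
    show "\<And>i j. lift1 a i j \<noteq> 0 \<Longrightarrow> i*(wa*\<delta>^n) + j*(wa*\<delta>^n) = wa*\<delta>^Suc n \<Longrightarrow>
        \<delta>^Suc n \<le> i*\<delta>^n + j*\<delta>^n \<and> i*\<delta>^n + j*\<delta>^n \<le> \<delta>^Suc n"
      using eqd by fastforce
    show "\<And>i j. lift1 a i j \<noteq> 0 \<Longrightarrow> i*(wa*\<delta>^n) + j*(wa*\<delta>^n) = wa*\<delta>^Suc n \<Longrightarrow> (i, j) \<noteq> (\<delta>, 0) \<Longrightarrow>
        \<delta>^Suc n < i*\<delta>^n + j*\<delta>^n"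
      using eqd by blast
    show "\<And>i j. lift1 a i j \<noteq> 0 \<Longrightarrow> i*(wa*\<delta>^n) + j*(wa*\<delta>^n) = wa*\<delta>^Suc n \<Longrightarrow> (i, j) \<noteq> (\<delta>, 0) \<Longrightarrow>
        i*\<delta>^n + j*\<delta>^n < \<delta>^Suc n"
      using eqd by blast
    show "lift1 a \<delta> 0 \<noteq> 0" using a_lead by (simp add: lift1_def)
    show "lift1 a \<delta> 0 \<noteq> 0" using a_lead by (simp add: lift1_def)
    show "\<delta>*(wa*\<delta>^n) + 0*(wa*\<delta>^n) = wa*\<delta>^Suc n" by (simp add: algebra_simps)
    show "\<delta>*(wa*\<delta>^n) + 0*(wa*\<delta>^n) = wa*\<delta>^Suc n" by (simp add: algebra_simps)
    show "\<delta>^Suc n = \<delta>*\<delta>^n + 0*\<delta>^n" by simp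
    show "\<delta>^Suc n = \<delta>*\<delta>^n + 0*\<delta>^n" by simp
    show "0 = \<delta>*0 + 0*(0::nat)" by simp
    show "0 = \<delta>*0 + 0*(0::nat)" by simp
  qed
  have "\<forall>z w. norm z \<le> \<rho>' \<longrightarrow> norm w \<le> \<rho>' \<longrightarrow> (p^^Suc n) z = ev (cmp2 (lift1 a) Pc Pc) z w"
    using S(3) by simp
  then show ?case using S(1,2) lev by blast
qed


lemma EQ_gen:
  fixes \<Lambda> x1 y1 x2 y2 :: "nat \<Rightarrow> nat"
  assumes Rq: "Rq > 0" "amaj b Rq" "\<And>u v. norm u \<le> Rq \<Longrightarrow> norm v \<le> Rq \<Longrightarrow> q u v = ev b u v"
    and EPn: "\<And>n. \<exists>\<rho> Pc. \<rho> > 0 \<and> amaj Pc \<rho> \<and> (\<forall>z w. norm z \<le> \<rho> \<longrightarrow> norm w \<le> \<rho> \<longrightarrow> (p^^n) z = ev Pc z w)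
          \<and> lev wa wb Pc (wa*\<delta>^n) (\<delta>^n) 0 (\<delta>^n) 0"
    and wa: "wa > 0" and \<delta>: "\<delta> \<ge> 1"
    and base: "lev wa wb b (\<Lambda> 1) (x1 1) (y1 1) (x2 1) (y2 1)"
    and pos: "\<And>n. n \<ge> 1 \<Longrightarrow> \<Lambda> n > 0"
    and step: "\<And>n Pc Qc. n \<ge> 1 \<Longrightarrow> lev wa wb Pc (wa*\<delta>^n) (\<delta>^n) 0 (\<delta>^n) 0 \<Longrightarrow>
        lev wa wb Qc (\<Lambda> n) (x1 n) (y1 n) (x2 n) (y2 n) \<Longrightarrow>
        lev wa wb (cmp2 b Pc Qc) (\<Lambda> (Suc n)) (x1 (Suc n)) (y1 (Suc n)) (x2 (Suc n)) (y2 (Suc n))"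
  shows "n \<ge> 1 \<Longrightarrow> \<exists>\<rho> Qc. \<rho> > 0 \<and> amaj Qc \<rho> \<and> (\<forall>z w. norm z \<le> \<rho> \<longrightarrow> norm w \<le> \<rho> \<longrightarrow> Qit p q n z w = ev Qc z w)
      \<and> lev wa wb Qc (\<Lambda> n) (x1 n) (y1 n) (x2 n) (y2 n)"
proof (induction n)
  case 0 then show ?case by simp
next
  case (Suc n)
  show ?case
  proof (cases "n = 0")
    case True
    have "\<forall>z w. norm z \<le> Rq \<longrightarrow> norm w \<le> Rq \<longrightarrow> Qit p q (Suc n) z w = ev b z w"
      using Rq(3) True by simp
    then have "\<forall>z w. norm z \<le> Rq \<longrightarrow> norm w \<le> Rq \<longrightarrow> Qit p q (Suc 0) z w = ev b z w" using True by simp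
    then show ?thesis using Rq(1,2) base True by (intro exI[of _ Rq] exI[of _ b]) simp
  next
    case False
    then have n1: "n \<ge> 1" by simp
    obtain \<rho> Qc where Q: "\<rho> > 0" "amaj Qc \<rho>" "\<forall>z w. norm z \<le> \<rho> \<longrightarrow> norm w \<le> \<rho> \<longrightarrow> Qit p q n z w = ev Qc z w"
      "lev wa wb Qc (\<Lambda> n) (x1 n) (y1 n) (x2 n) (y2 n)" using Suc.IH n1 by blast
    obtain \<rho>1 Pc where P: "\<rho>1 > 0" "amaj Pc \<rho>1" "\<forall>z w. norm z \<le> \<rho>1 \<longrightarrow> norm w \<le> \<rho>1 \<longrightarrow> (p^^n) z = ev Pc z w"
      "lev wa wb Pc (wa*\<delta>^n) (\<delta>^n) 0 (\<delta>^n) 0" using EPn by blast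
    have P00: "Pc 0 0 = 0" using lev_c00[OF P(4)] wa \<delta> by simp
    have Q00: "Qc 0 0 = 0" using lev_c00[OF Q(4)] pos[OF n1] by simp
    have P3: "\<And>z w. norm z \<le> \<rho>1 \<Longrightarrow> norm w \<le> \<rho>1 \<Longrightarrow> (p^^n) z = ev Pc z w" using P(3) by blast
    have Q3: "\<And>z w. norm z \<le> \<rho> \<Longrightarrow> norm w \<le> \<rho> \<Longrightarrow> Qit p q n z w = ev Qc z w" using Q(3) by blast
    obtain \<rho>' where S: "\<rho>' > 0" "amaj (cmp2 b Pc Qc) \<rho>'"
      "\<forall>z w. norm z \<le> \<rho>' \<longrightarrow> norm w \<le> \<rho>' \<longrightarrow> q ((p^^n) z) (Qit p q n z w) = ev (cmp2 b Pc Qc) z w"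
      using Qstep[OF Rq P(1,2) P3 P00 Q(1,2) Q3 Q00] by blast
    have "\<forall>z w. norm z \<le> \<rho>' \<longrightarrow> norm w \<le> \<rho>' \<longrightarrow> Qit p q (Suc n) z w = ev (cmp2 b Pc Qc) z w"
      using S(3) by simp
    then show ?thesis using S(1,2) step[OF n1 P(4) Q(4)] by blast
  qed
qed

lemma final_geo:
  assumes wa: "wa > 0" and wb: "wb > 0" and c: "lev wa wb c L x1 y1 x2 y2" and y: "y2 < y1"
  shows "next_vertex c (real x1, real y1) (real x2, real y2)"
    "slope (real x1, real y1) (real x2, real y2) = - (real wa / real wb)"
    "yint (real x1, real y1) (real x2, real y2) = real L / real wb"
proof -
  have e: "wa*x1 + wb*y1 = L" "wa*x2 + wb*y2 = L" using c unfolding lev_def by auto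
  have re: "real wa * real x1 + real wb * real y1 = real L" "real wa * real x2 + real wb * real y2 = real L"
    using e by (metis of_nat_add of_nat_mult)+
  have "real wa * (real x2 - real x1) = real wb * (real y1 - real y2)" using re by (simp add: algebra_simps)
  moreover have "real wb * (real y1 - real y2) > 0" using wb y by simp
  ultimately have "real wa * (real x2 - real x1) > 0" by simp
  then have x: "x1 < x2" using wa by (simp add: zero_less_mult_iff)
  show "next_vertex c (real x1, real y1) (real x2, real y2)" by (rule lev_next_vertex[OF wa wb c x])
  have d: "real x2 - real x1 \<noteq> 0" using x by simp
  have sl: "(real y2 - real y1) / (real x2 - real x1) = - (real wa / real wb)"
    using re d wb by (simp add: field_simps)
  then show "slope (real x1, real y1) (real x2, real y2) = - (real wa / real wb)" by (simp add: slope_def)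
  have "yint (real x1, real y1) (real x2, real y2) = real y1 + real x1 * (real wa / real wb)"
    using sl by (simp add: yint_def slope_def)
  also have "\<dots> = (real wa * real x1 + real wb * real y1) / real wb" using wb by (simp add: field_simps)
  finally show "yint (real x1, real y1) (real x2, real y2) = real L / real wb" using re by simp
qed


definition gs :: "nat \<Rightarrow> nat \<Rightarrow> nat \<Rightarrow> nat" where
  "gs x y n = (\<Sum>k<n. x ^ (n - 1 - k) * y ^ k)"

lemma gs_Suc: "gs x y (Suc n) = x ^ n + y * gs x y n"
proof -
  have "gs x y (Suc n) = (\<Sum>k<Suc n. x ^ (n - k) * y ^ k)" by (simp add: gs_def)
  also have "\<dots> = x ^ (n - 0) * y ^ 0 + (\<Sum>k<n. x ^ (n - Suc k) * y ^ Suc k)"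
    by (rule sum.lessThan_Suc_shift)
  also have "(\<Sum>k<n. x ^ (n - Suc k) * y ^ Suc k) = y * (\<Sum>k<n. x ^ (n - 1 - k) * y ^ k)"
    by (simp add: sum_distrib_left algebra_simps)
  finally show ?thesis by (simp add: gs_def)
qed

lemma gs_1: "gs x y 1 = 1" by (simp add: gs_def)

lemma key_i_int:
  fixes wa wb L E g d i j :: int
  assumes wa: "wa > 0" and L: "L > 0" and E: "wb*E > L" and i: "g \<le> i" and K: "wa*g + wb*d \<le> wa*i + wb*j"
  shows "wb*(g*(wa*E) + d*L) \<le> wb*(i*(wa*E) + j*L)"
    "wb*(g*(wa*E) + d*L) = wb*(i*(wa*E) + j*L) \<Longrightarrow> i = g \<and> wa*i + wb*j = wa*g + wb*d"
proof -
  have id: "wb*(i*(wa*E) + j*L) - wb*(g*(wa*E) + d*L) = L*(wa*i + wb*j - (wa*g + wb*d)) + wa*(i-g)*(wb*E - L)"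
    by (simp add: algebra_simps)
  have t1: "L*(wa*i + wb*j - (wa*g + wb*d)) \<ge> 0" using L K by simp
  have t2: "wa*(i-g)*(wb*E - L) \<ge> 0" using wa i E by simp
  show "wb*(g*(wa*E) + d*L) \<le> wb*(i*(wa*E) + j*L)" using id t1 t2 by linarith
  assume "wb*(g*(wa*E) + d*L) = wb*(i*(wa*E) + j*L)"
  then have "L*(wa*i + wb*j - (wa*g + wb*d)) = 0" "wa*(i-g)*(wb*E - L) = 0" using id t1 t2 by linarith+
  then show "i = g \<and> wa*i + wb*j = wa*g + wb*d" using wa L E by auto
qed

lemma key_i:
  fixes wa wb L E g d i j :: nat
  assumes wa: "wa > 0" and wb: "wb > 0" and L: "L > 0" and E: "wb*E > L" and i: "g \<le> i" and K: "wa*g + wb*d \<le> wa*i + wb*j"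
  shows "g*(wa*E) + d*L \<le> i*(wa*E) + j*L"
    "g*(wa*E) + d*L = i*(wa*E) + j*L \<Longrightarrow> i = g \<and> j = d"
proof -
  have E': "int wb * int E > int L" using E by (metis of_nat_less_iff of_nat_mult)
  have K': "int wa * int g + int wb * int d \<le> int wa * int i + int wb * int j" using K
    by (metis of_nat_add of_nat_le_iff of_nat_mult)
  note k = key_i_int[of "int wa" "int L" "int wb" "int E" "int g" "int i" "int d" "int j"]
  have "int wb * (int g * (int wa * int E) + int d * int L) \<le> int wb * (int i * (int wa * int E) + int j * int L)"
    using k(1) wa L E' i K' by simp
  then have "wb*(g*(wa*E) + d*L) \<le> wb*(i*(wa*E) + j*L)" by (metis of_nat_add of_nat_le_iff of_nat_mult)
  then show "g*(wa*E) + d*L \<le> i*(wa*E) + j*L" using wb by simp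
  assume "g*(wa*E) + d*L = i*(wa*E) + j*L"
  then have "int wb * (int g * (int wa * int E) + int d * int L) = int wb * (int i * (int wa * int E) + int j * int L)"
    by (metis of_nat_add of_nat_mult)
  moreover have "int wa > 0" "int L > 0" "int g \<le> int i" using wa L i by auto
  ultimately have h: "int i = int g \<and> int wa * int i + int wb * int j = int wa * int g + int wb * int d"
    using k(2) E' K' by blast
  then have ig: "i = g" by simp
  have "int wa * int g + int wb * int j = int wa * int g + int wb * int d" using h ig by simp
  then have "int wb * int j = int wb * int d" by linarith
  then have "j = d" using wb by simp
  then show "i = g \<and> j = d" using ig by simp
qed

lemma step_i:
  fixes b :: "nat \<Rightarrow> nat \<Rightarrow> complex" and g d C D \<delta> wa wb n :: nat
  assumes wa: "wa > 0" and wb: "wb > 0" and dD: "d = D + wa"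
    and hb1: "\<forall>i j. b i j \<noteq> 0 \<longrightarrow> g \<le> i"
    and hb2: "\<forall>i j. b i j \<noteq> 0 \<longrightarrow> wa*g + wb*d \<le> wa*i + wb*j"
    and b0: "b g d \<noteq> 0" and n: "n \<ge> 1"
    and LE: "wa*(g*gs \<delta> d n) + wb*d^n < wb*\<delta>^n"
    and P: "lev wa wb Pc (wa*\<delta>^n) (\<delta>^n) 0 (\<delta>^n) 0"
    and Q: "lev wa wb Qc (wa*(g*gs \<delta> d n) + wb*d^n) (g*gs \<delta> d n) (d^n) (g*gs \<delta> d n + wb*d^(n-1)) (D*d^(n-1))"
  shows "lev wa wb (cmp2 b Pc Qc) (wa*(g*gs \<delta> d (Suc n)) + wb*d^(Suc n)) (g*gs \<delta> d (Suc n)) (d^Suc n)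
     (g*gs \<delta> d (Suc n) + wb*d^(Suc n - 1)) (D*d^(Suc n - 1))"
proof -
  define E where "E = \<delta>^n"
  define G where "G = g*gs \<delta> d n"
  define L where "L = wa*G + wb*d^n"
  have d1: "d \<ge> 1" using dD wa by simp
  have Lpos: "L > 0" using d1 wb by (simp add: L_def)
  have LE': "wb*E > L" using LE by (simp add: L_def G_def E_def)
  have G': "g*gs \<delta> d (Suc n) = g*E + d*G" by (simp add: gs_Suc E_def G_def algebra_simps)
  have L': "wa*(g*gs \<delta> d (Suc n)) + wb*d^(Suc n) = g*(wa*E) + d*L"
    unfolding G' by (simp add: L_def algebra_simps)
  have dn: "d * d^(n-1) = d^n" using n by (cases n) auto
  have X': "g*gs \<delta> d (Suc n) + wb*d^(Suc n - 1) = g*E + d*(G + wb*d^(n-1))"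
    unfolding G' using dn by (simp add: algebra_simps)
  have Y': "D*d^(Suc n - 1) = g*0 + d*(D*d^(n-1))" using dn by (simp add: algebra_simps)
  have Y1: "d^Suc n = g*0 + d*d^n" by simp
  have kk: "\<And>i j. b i j \<noteq> 0 \<Longrightarrow> g*(wa*E) + d*L \<le> i*(wa*E) + j*L \<and>
       (g*(wa*E) + d*L = i*(wa*E) + j*L \<longrightarrow> i = g \<and> j = d)"
  proof -
    fix i j assume h: "b i j \<noteq> 0"
    have i: "g \<le> i" and K: "wa*g + wb*d \<le> wa*i + wb*j" using hb1 hb2 h by auto
    show "g*(wa*E) + d*L \<le> i*(wa*E) + j*L \<and> (g*(wa*E) + d*L = i*(wa*E) + j*L \<longrightarrow> i = g \<and> j = d)"
      using key_i(1)[OF wa wb Lpos LE' i K] key_i(2)[OF wa wb Lpos LE' i K] by blast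
  qed
  have Q': "lev wa wb Qc L G (d^n) (G + wb*d^(n-1)) (D*d^(n-1))" using Q by (simp add: L_def G_def)
  have P': "lev wa wb Pc (wa*E) E 0 E 0" using P by (simp add: E_def)
  have "lev wa wb (cmp2 b Pc Qc) (g*(wa*E) + d*L) (g*E + d*G) (d^Suc n) (g*E + d*(G + wb*d^(n-1))) (D*d^(Suc n - 1))"
  proof (rule comp_lev[OF wb P' Q', where ?i0.0=g and ?j0.0=d and ?i1.0=g and ?j1.0=d])
    show "\<And>i j. b i j \<noteq> 0 \<Longrightarrow> g*(wa*E) + d*L \<le> i*(wa*E) + j*L" using kk by blast
    show "\<And>i j. b i j \<noteq> 0 \<Longrightarrow> i*(wa*E) + j*L = g*(wa*E) + d*L \<Longrightarrow>
        g*E + d*G \<le> i*E + j*G \<and> i*E + j*(G + wb*d^(n-1)) \<le> g*E + d*(G + wb*d^(n-1))"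
    proof -
      fix i j assume "b i j \<noteq> 0" "i*(wa*E) + j*L = g*(wa*E) + d*L"
      then have "i = g \<and> j = d" using kk[of i j] by simp
      then show "g*E + d*G \<le> i*E + j*G \<and> i*E + j*(G + wb*d^(n-1)) \<le> g*E + d*(G + wb*d^(n-1))" by simp
    qed
    show "\<And>i j. b i j \<noteq> 0 \<Longrightarrow> i*(wa*E) + j*L = g*(wa*E) + d*L \<Longrightarrow> (i, j) \<noteq> (g, d) \<Longrightarrow>
        g*E + d*G < i*E + j*G" using kk by (metis (no_types, lifting))
    show "\<And>i j. b i j \<noteq> 0 \<Longrightarrow> i*(wa*E) + j*L = g*(wa*E) + d*L \<Longrightarrow> (i, j) \<noteq> (g, d) \<Longrightarrow>
        i*E + j*(G + wb*d^(n-1)) < g*E + d*(G + wb*d^(n-1))" using kk by (metis (no_types, lifting))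
  qed (use b0 Y1 Y' in simp_all)
  note fact = this
  have e1: "wa*(g*E + d*G) + wb*d^Suc n = g*(wa*E) + d*L" using L' G' by simp
  have e2: "g*E + d*G + wb*d^(Suc n - 1) = g*E + d*(G + wb*d^(n-1))" using X' G' by simp
  show ?thesis unfolding G' e1 e2 by (rule fact)
qed

lemma LE_i:
  assumes wa: "wa > 0" and wb: "wb > 0" and d1: "d \<ge> 1" and K: "wa*g + wb*d < wb*\<delta>" and n: "n \<ge> 1"
  shows "wa*(g*gs \<delta> d n) + wb*d^n < wb*\<delta>^n"
  using n
proof -
  have \<delta>pos: "\<delta> > 0" using K by (cases "\<delta> = 0") auto
  show ?thesis using n
proof (induction n)
  case 0 then show ?case by simp
next
  case (Suc n)
  show ?case
  proof (cases "n = 0")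
    case True then show ?thesis using K by (simp add: gs_def)
  next
    case False
    then have IH: "wa*(g*gs \<delta> d n) + wb*d^n < wb*\<delta>^n" using Suc by simp
    have "wa*(g*gs \<delta> d (Suc n)) + wb*d^(Suc n) = g*wa*\<delta>^n + d*(wa*(g*gs \<delta> d n) + wb*d^n)"
      by (simp add: gs_Suc algebra_simps)
    also have "\<dots> < g*wa*\<delta>^n + d*(wb*\<delta>^n)" using IH d1 by simp
    also have "\<dots> = \<delta>^n * (wa*g + wb*d)" by (simp add: algebra_simps)
    also have "\<dots> < \<delta>^n * (wb*\<delta>)" using K \<delta>pos by simp
    also have "\<dots> \<le> wb*\<delta>^Suc n" by (simp add: algebra_simps)
    finally show ?thesis .
  qed
qed
qed


lemma key_lo_int:
  fixes wa wb g d i j G Y E :: int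
  assumes wb: "wb > 0" and line: "wa*i + wb*j = wa*g + wb*d" and i: "g \<le> i"
    and eq: "wa*G + wb*Y = wb*E" and Y: "Y > 0"
  shows "wb*(i*E + j*G) - wb*(g*E + d*G) = (i-g)*wb*Y"
proof -
  have "wb*(i*E + j*G) - wb*(g*E + d*G) - (i-g)*wb*Y = (i-g)*(wb*E - wa*G - wb*Y) + G*(wa*i + wb*j - (wa*g + wb*d))"
    by (simp add: algebra_simps)
  also have "\<dots> = 0" using eq line by simp
  finally show ?thesis by simp
qed

lemma key_hi_int:
  fixes wa wb C D i j X Y E :: int
  assumes wb: "wb > 0" and line: "wa*i + wb*j = wa*C + wb*D" and i: "i \<le> C"
    and eq: "wa*X + wb*Y = wb*E" and Y: "Y > 0"
  shows "wb*(C*E + D*X) - wb*(i*E + j*X) = (C-i)*wb*Y"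
proof -
  have "wb*(C*E + D*X) - wb*(i*E + j*X) - (C-i)*wb*Y = (C-i)*(wb*E - wa*X - wb*Y) - X*(wa*i + wb*j - (wa*C + wb*D))"
    by (simp add: algebra_simps)
  also have "\<dots> = 0" using eq line by simp
  finally show ?thesis by simp
qed

lemma key_lo:
  fixes wa wb g d i j G Y E :: nat
  assumes wb: "wb > 0" and line: "wa*i + wb*j = wa*g + wb*d" and i: "g \<le> i"
    and eq: "wa*G + wb*Y = wb*E" and Y: "Y > 0"
  shows "g*E + d*G \<le> i*E + j*G" "g*E + d*G = i*E + j*G \<Longrightarrow> i = g"
proof -
  have line': "int wa * int i + int wb * int j = int wa * int g + int wb * int d" using line
    by (metis of_nat_add of_nat_mult)
  have eq': "int wa * int G + int wb * int Y = int wb * int E" using eq by (metis of_nat_add of_nat_mult)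
  have k: "int wb * (int i * int E + int j * int G) - int wb * (int g * int E + int d * int G) = (int i - int g) * int wb * int Y"
    by (rule key_lo_int) (use wb line' i eq' Y in auto)
  have nn: "(int i - int g) * int wb * int Y \<ge> 0" using i by simp
  then have "int wb * (int g * int E + int d * int G) \<le> int wb * (int i * int E + int j * int G)" using k by linarith
  then have "int (g*E + d*G) \<le> int (i*E + j*G)" using wb by (simp add: mult_le_cancel_left)
  then show "g*E + d*G \<le> i*E + j*G" by (simp only: of_nat_le_iff)
  assume "g*E + d*G = i*E + j*G"
  then have "int (g*E + d*G) = int (i*E + j*G)" by simp
  then have "(int i - int g) * int wb * int Y = 0" using k by simp
  then show "i = g" using wb Y by simp
qed

lemma key_hi:
  fixes wa wb C D i j X Y E :: nat
  assumes wb: "wb > 0" and line: "wa*i + wb*j = wa*C + wb*D" and i: "i \<le> C"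
    and eq: "wa*X + wb*Y = wb*E" and Y: "Y > 0"
  shows "i*E + j*X \<le> C*E + D*X" "i*E + j*X = C*E + D*X \<Longrightarrow> i = C"
proof -
  have line': "int wa * int i + int wb * int j = int wa * int C + int wb * int D" using line
    by (metis of_nat_add of_nat_mult)
  have eq': "int wa * int X + int wb * int Y = int wb * int E" using eq by (metis of_nat_add of_nat_mult)
  have k: "int wb * (int C * int E + int D * int X) - int wb * (int i * int E + int j * int X) = (int C - int i) * int wb * int Y"
    by (rule key_hi_int) (use wb line' i eq' Y in auto)
  have nn: "(int C - int i) * int wb * int Y \<ge> 0" using i by simp
  then have "int wb * (int i * int E + int j * int X) \<le> int wb * (int C * int E + int D * int X)" using k by linarith
  then have "int (i*E + j*X) \<le> int (C*E + D*X)" using wb by (simp add: mult_le_cancel_left)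
  then show "i*E + j*X \<le> C*E + D*X" by (simp only: of_nat_le_iff)
  assume "i*E + j*X = C*E + D*X"
  then have "int (i*E + j*X) = int (C*E + D*X)" by simp
  then have "(int C - int i) * int wb * int Y = 0" using k by simp
  then show "i = C" using wb Y by simp
qed

lemma step_ii:
  fixes b :: "nat \<Rightarrow> nat \<Rightarrow> complex" and g d C D \<delta> wa wb n :: nat
  assumes wa: "wa > 0" and wb: "wb > 0" and D0: "D > 0" and d0: "d > 0"
    and K2: "wa*C + wb*D = wa*g + wb*d"
    and hb1: "\<forall>i j. b i j \<noteq> 0 \<longrightarrow> g \<le> i"
    and hb2: "\<forall>i j. b i j \<noteq> 0 \<longrightarrow> wa*g + wb*d \<le> wa*i + wb*j"
    and hb3: "\<forall>i j. b i j \<noteq> 0 \<and> wa*i + wb*j = wa*g + wb*d \<longrightarrow> i \<le> C"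
    and b0: "b g d \<noteq> 0" and b1: "b C D \<noteq> 0"
    and K\<delta>: "wa*g + wb*d = wb*\<delta>"
    and P: "lev wa wb Pc (wa*\<delta>^n) (\<delta>^n) 0 (\<delta>^n) 0"
    and Q: "lev wa wb Qc (wb*\<delta>^n) (g*gs \<delta> d n) (d^n) (C*gs \<delta> D n) (D^n)"
  shows "lev wa wb (cmp2 b Pc Qc) (wb*\<delta>^(Suc n)) (g*gs \<delta> d (Suc n)) (d^Suc n) (C*gs \<delta> D (Suc n)) (D^Suc n)"
proof -
  define E where "E = \<delta>^n"
  define G where "G = g*gs \<delta> d n"
  define X where "X = C*gs \<delta> D n"
  define K where "K = wa*g + wb*d"
  have "wb*\<delta> > 0" using K\<delta> wb d0 by (metis add_gr_0 mult_pos_pos)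
  then have \<delta>0: "\<delta> > 0" by simp
  then have E0: "E > 0" by (simp add: E_def)
  have eqG: "wa*G + wb*d^n = wb*E" and eqX: "wa*X + wb*D^n = wb*E"
    using Q unfolding lev_def G_def X_def E_def by auto
  have L': "wb*\<delta>^(Suc n) = E*K" using K\<delta> by (simp add: K_def E_def algebra_simps)
  have wt: "\<And>i j. i*(wa*E) + j*(wb*E) = E*(wa*i + wb*j)" by (simp add: algebra_simps)
  have onl: "\<And>i j. b i j \<noteq> 0 \<Longrightarrow> i*(wa*E) + j*(wb*E) = E*K \<Longrightarrow> wa*i + wb*j = K \<and> g \<le> i \<and> i \<le> C"
  proof -
    fix i j assume h: "b i j \<noteq> 0" "i*(wa*E) + j*(wb*E) = E*K"
    then have "E*(wa*i + wb*j) = E*K" using wt by simp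
    then have l: "wa*i + wb*j = K" using E0 by simp
    then show "wa*i + wb*j = K \<and> g \<le> i \<and> i \<le> C" using hb1 hb3 h(1) K_def by auto
  qed
  have G': "g*gs \<delta> d (Suc n) = g*E + d*G" by (simp add: gs_Suc E_def G_def algebra_simps)
  have X': "C*gs \<delta> D (Suc n) = C*E + D*X" by (simp add: gs_Suc E_def X_def algebra_simps)
  have dn0: "d^n > 0" using d0 by simp
  have Dn0: "D^n > 0" using D0 by simp
  have Q': "lev wa wb Qc (wb*E) G (d^n) X (D^n)" using Q by (simp add: E_def G_def X_def)
  have P': "lev wa wb Pc (wa*E) E 0 E 0" using P by (simp add: E_def)
  have "lev wa wb (cmp2 b Pc Qc) (E*K) (g*E + d*G) (d^Suc n) (C*E + D*X) (D^Suc n)"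
  proof (rule comp_lev[OF wb P' Q', where ?i0.0=g and ?j0.0=d and ?i1.0=C and ?j1.0=D])
    show "\<And>i j. b i j \<noteq> 0 \<Longrightarrow> E*K \<le> i*(wa*E) + j*(wb*E)"
      using hb2 wt K_def by (simp add: mult_le_mono2)
    show "\<And>i j. b i j \<noteq> 0 \<Longrightarrow> i*(wa*E) + j*(wb*E) = E*K \<Longrightarrow>
        g*E + d*G \<le> i*E + j*G \<and> i*E + j*X \<le> C*E + D*X"
    proof -
      fix i j assume h: "b i j \<noteq> 0" "i*(wa*E) + j*(wb*E) = E*K"
      then have o: "wa*i + wb*j = K" "g \<le> i" "i \<le> C" using onl by auto
      have "g*E + d*G \<le> i*E + j*G" using key_lo(1)[OF wb _ o(2) eqG dn0] o(1) K_def by simp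
      moreover have "i*E + j*X \<le> C*E + D*X" using key_hi(1)[OF wb _ o(3) eqX Dn0] o(1) K_def K2 by simp
      ultimately show "g*E + d*G \<le> i*E + j*G \<and> i*E + j*X \<le> C*E + D*X" by simp
    qed
    show "\<And>i j. b i j \<noteq> 0 \<Longrightarrow> i*(wa*E) + j*(wb*E) = E*K \<Longrightarrow> (i, j) \<noteq> (g, d) \<Longrightarrow>
        g*E + d*G < i*E + j*G"
    proof -
      fix i j assume h: "b i j \<noteq> 0" "i*(wa*E) + j*(wb*E) = E*K" "(i, j) \<noteq> (g, d)"
      then have o: "wa*i + wb*j = K" "g \<le> i" "i \<le> C" using onl by auto
      have ne: "i \<noteq> g"
      proof
        assume "i = g"
        then have "wb*j = wb*d" using o(1) K_def by simp
        then have "j = d" using wb by simp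
        then show False using h(3) \<open>i = g\<close> by simp
      qed
      have l: "wa*i + wb*j = wa*g + wb*d" using o(1) K_def by simp
      show "g*E + d*G < i*E + j*G" using key_lo[OF wb l o(2) eqG dn0] ne by linarith
    qed
    show "\<And>i j. b i j \<noteq> 0 \<Longrightarrow> i*(wa*E) + j*(wb*E) = E*K \<Longrightarrow> (i, j) \<noteq> (C, D) \<Longrightarrow>
        i*E + j*X < C*E + D*X"
    proof -
      fix i j assume h: "b i j \<noteq> 0" "i*(wa*E) + j*(wb*E) = E*K" "(i, j) \<noteq> (C, D)"
      then have o: "wa*i + wb*j = K" "g \<le> i" "i \<le> C" using onl by auto
      have l: "wa*i + wb*j = wa*C + wb*D" using o(1) K_def K2 by simp
      have ne: "i \<noteq> C"
      proof
        assume "i = C"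
        then have "wb*j = wb*D" using l by simp
        then have "j = D" using wb by simp
        then show False using h(3) \<open>i = C\<close> by simp
      qed
      show "i*E + j*X < C*E + D*X" using key_hi[OF wb l o(3) eqX Dn0] ne by linarith
    qed
    show "b g d \<noteq> 0" by (rule b0)
    show "b C D \<noteq> 0" by (rule b1)
    show "g*(wa*E) + d*(wb*E) = E*K" using wt K_def by simp
    show "C*(wa*E) + D*(wb*E) = E*K" using wt K_def K2 by simp
    show "g*E + d*G = g*E + d*G" by simp
    show "C*E + D*X = C*E + D*X" by simp
    show "d^Suc n = g*0 + d*d^n" by simp
    show "D^Suc n = C*0 + D*D^n" by simp
  qed
  then show ?thesis unfolding G' X' L' .
qed


theorem proposition5:
  fixes p :: "complex \<Rightarrow> complex" and q :: "complex \<Rightarrow> complex \<Rightarrow> complex"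
    and a :: "nat \<Rightarrow> complex" and b :: "nat \<Rightarrow> nat \<Rightarrow> complex"
    and \<delta> n1 m1 n2 m2 :: nat
  assumes p_exp: "has_expansion1 p a"
    and \<delta>_pos: "\<delta> \<ge> 1"
    and a_low: "\<forall>i<\<delta>. a i = 0" and a_lead: "a \<delta> \<noteq> 0"
    and q_exp: "has_expansion2 q b"
    and b00: "b 0 0 = 0"
    and q_nonzero: "\<exists>i j. b i j \<noteq> 0"
    and v1: "is_vertex b (real n1, real m1)"
    and v1_first: "\<forall>R. is_vertex b R \<longrightarrow> real n1 \<le> fst R"
    and v2: "next_vertex b (real n1, real m1) (real n2, real m2)"
    and case3: "yint (real n1, real m1) (real n2, real m2) \<le> real \<delta>"
  defines "\<gamma> \<equiv> real n1" and "d \<equiv> real m1" and "C \<equiv> real n2" and "D \<equiv> real m2"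
    and "T1 \<equiv> yint (real n1, real m1) (real n2, real m2)"
    and "l2 \<equiv> (real n2 - real n1) / (real m1 - real m2)"
  shows
   "(real \<delta> > T1 \<longrightarrow> (\<forall>n\<ge>1.
      let \<gamma>n = \<gamma> * (\<Sum>k<n. real \<delta> ^ (n - 1 - k) * d ^ k);
          P = (\<gamma>n, d ^ n);
          Qv = (\<gamma>n - (\<gamma> - C) * d ^ (n - 1), D * d ^ (n - 1))
      in next_vertex (coeffs2 (Qit p q n)) P Qv \<and> slope P Qv = - 1 / l2
         \<and> real \<delta> ^ n > yint P Qv))
  \<and> (real \<delta> = T1 \<and> m2 > 0 \<longrightarrow> (\<forall>n\<ge>1.
      let \<gamma>n = \<gamma> * (\<Sum>k<n. real \<delta> ^ (n - 1 - k) * d ^ k);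
          P = (\<gamma>n, d ^ n);
          Qv = ((\<Sum>k<n. real \<delta> ^ (n - 1 - k) * D ^ k) * C, D ^ n)
      in next_vertex (coeffs2 (Qit p q n)) P Qv \<and> slope P Qv = - 1 / l2
         \<and> real \<delta> ^ n = yint P Qv))"
proof -
  note bg = b_geometry[OF q_nonzero v1 v1_first v2]
  define wa where "wa = m1 - m2"
  define wb where "wb = n2 - n1"
  define K where "K = wa*n1 + wb*m1"
  have n12: "n1 < n2" and m12: "m2 < m1" and b1: "b n1 m1 \<noteq> 0" and b2: "b n2 m2 \<noteq> 0"
    using bg by auto
  have hb1: "\<forall>i j. b i j \<noteq> 0 \<longrightarrow> n1 \<le> i" using bg(5) .
  have hb2: "\<forall>i j. b i j \<noteq> 0 \<longrightarrow> wa*n1 + wb*m1 \<le> wa*i + wb*j" using bg(6) by (simp add: wa_def wb_def)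
  have hb3: "\<forall>i j. b i j \<noteq> 0 \<and> wa*i + wb*j = wa*n1 + wb*m1 \<longrightarrow> i \<le> n2" using bg(7) by (simp add: wa_def wb_def)
  have wa: "wa > 0" and wb: "wb > 0" using n12 m12 by (auto simp: wa_def wb_def)
  have dD: "m1 = m2 + wa" and Cg: "n2 = n1 + wb" using n12 m12 by (auto simp: wa_def wb_def)
  have K2: "wa*n2 + wb*m2 = wa*n1 + wb*m1" unfolding Cg dD by (simp add: algebra_simps)
  have m1pos: "m1 > 0" using m12 by simp
  have rwa: "real wa = real m1 - real m2" and rwb: "real wb = real n2 - real n1"
    using n12 m12 by (auto simp: wa_def wb_def)
  obtain Rp where Rp: "Rp > 0" "amaj (lift1 a) Rp" "\<forall>z w. norm z \<le> Rp \<longrightarrow> p z = ev (lift1 a) z w"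
    using has_exp1_amaj[OF p_exp] by blast
  obtain Rq where Rq: "Rq > 0" "amaj b Rq" "\<forall>z w. norm z \<le> Rq \<longrightarrow> norm w \<le> Rq \<longrightarrow> q z w = ev b z w"
    using has_exp2_amaj[OF q_exp] by blast
  have Rp3: "\<And>z w. norm z \<le> Rp \<Longrightarrow> p z = ev (lift1 a) z w" using Rp(3) by blast
  have Rq3: "\<And>u v. norm u \<le> Rq \<Longrightarrow> norm v \<le> Rq \<Longrightarrow> q u v = ev b u v" using Rq(3) by blast
  have EPn: "\<And>n. \<exists>\<rho> Pc. \<rho> > 0 \<and> amaj Pc \<rho> \<and> (\<forall>z w. norm z \<le> \<rho> \<longrightarrow> norm w \<le> \<rho> \<longrightarrow> (p^^n) z = ev Pc z w)
          \<and> lev wa wb Pc (wa*\<delta>^n) (\<delta>^n) 0 (\<delta>^n) 0"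
    using EP[OF Rp(1,2) Rp3 \<delta>_pos a_low a_lead wa wb] by blast
  have coef: "\<And>n Qc \<rho>. \<rho> > 0 \<Longrightarrow> amaj Qc \<rho> \<Longrightarrow> (\<forall>z w. norm z \<le> \<rho> \<longrightarrow> norm w \<le> \<rho> \<longrightarrow> Qit p q n z w = ev Qc z w)
      \<Longrightarrow> coeffs2 (Qit p q n) = Qc"
    by (rule coeffs2_eq, rule amaj_has_exp2) auto
  have levb: "lev wa wb b (wa*n1 + wb*m1) n1 m1 n2 m2"
    unfolding lev_def using hb2 hb3 hb1 K2 b1 b2 by auto
  have T1e: "T1 = real (wa*n1 + wb*m1) / real wb"
  proof -
    have "T1 = real m1 - real n1 * ((real m2 - real m1) / (real n2 - real n1))"
      by (simp add: T1_def yint_def slope_def)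
    also have "\<dots> = real m1 + real n1 * (real wa / real wb)"
    proof -
      have e1: "real m2 - real m1 = - real wa" using rwa by simp
      have e2: "real n2 - real n1 = real wb" using rwb by simp
      show ?thesis unfolding e1 e2 by simp
    qed
    also have "\<dots> = real (wa*n1 + wb*m1) / real wb" using wb by (simp add: field_simps)
    finally show ?thesis .
  qed
  have l2v: "l2 = real wb / real wa" using rwa rwb by (simp add: l2_def)
  have l2e: "- 1 / l2 = - (real wa / real wb)" unfolding l2v by simp
  have gsr: "\<And>x y n. real (gs x y n) = (\<Sum>k<n. real x ^ (n - 1 - k) * real y ^ k)"
    by (simp add: gs_def)
  show ?thesis
  proof (intro conjI impI allI)
    fix n :: nat assume cond: "real \<delta> > T1" and n: "n \<ge> 1"
    have Kl: "wa*n1 + wb*m1 < wb*\<delta>"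
    proof -
      have "real (wa*n1 + wb*m1) / real wb < real \<delta>" using cond T1e by simp
      then have "real (wa*n1 + wb*m1) < real \<delta> * real wb" using wb by (simp add: field_simps)
      then show ?thesis by (simp only: of_nat_mult[symmetric] of_nat_less_iff) (simp add: mult.commute)
    qed
    have ex: "\<exists>\<rho> Qc. \<rho> > 0 \<and> amaj Qc \<rho> \<and> (\<forall>z w. norm z \<le> \<rho> \<longrightarrow> norm w \<le> \<rho> \<longrightarrow> Qit p q n z w = ev Qc z w)
      \<and> lev wa wb Qc ((\<lambda>n. wa*(n1*gs \<delta> m1 n) + wb*m1^n) n) ((\<lambda>n. n1*gs \<delta> m1 n) n) ((\<lambda>n. m1^n) n)
          ((\<lambda>n. n1*gs \<delta> m1 n + wb*m1^(n-1)) n) ((\<lambda>n. m2*m1^(n-1)) n)"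
    proof (rule EQ_gen[OF Rq(1,2) Rq3 EPn wa \<delta>_pos _ _ _ n])
      show "lev wa wb b ((\<lambda>n. wa*(n1*gs \<delta> m1 n) + wb*m1^n) 1) ((\<lambda>n. n1*gs \<delta> m1 n) 1) ((\<lambda>n. m1^n) 1)
          ((\<lambda>n. n1*gs \<delta> m1 n + wb*m1^(n-1)) 1) ((\<lambda>n. m2*m1^(n-1)) 1)"
        using levb Cg by (simp add: gs_def)
      show "\<And>n. n \<ge> 1 \<Longrightarrow> (\<lambda>n. wa*(n1*gs \<delta> m1 n) + wb*m1^n) n > 0" using wb m1pos by simp
      fix k Pc Qc assume k: "k \<ge> 1" and P: "lev wa wb Pc (wa*\<delta>^k) (\<delta>^k) 0 (\<delta>^k) 0"
        and Q: "lev wa wb Qc ((\<lambda>n. wa*(n1*gs \<delta> m1 n) + wb*m1^n) k) ((\<lambda>n. n1*gs \<delta> m1 n) k) ((\<lambda>n. m1^n) k)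
          ((\<lambda>n. n1*gs \<delta> m1 n + wb*m1^(n-1)) k) ((\<lambda>n. m2*m1^(n-1)) k)"
      have LE: "wa*(n1*gs \<delta> m1 k) + wb*m1^k < wb*\<delta>^k" by (rule LE_i[OF wa wb _ Kl k]) (use m1pos in simp)
      show "lev wa wb (cmp2 b Pc Qc) ((\<lambda>n. wa*(n1*gs \<delta> m1 n) + wb*m1^n) (Suc k)) ((\<lambda>n. n1*gs \<delta> m1 n) (Suc k))
          ((\<lambda>n. m1^n) (Suc k)) ((\<lambda>n. n1*gs \<delta> m1 n + wb*m1^(n-1)) (Suc k)) ((\<lambda>n. m2*m1^(n-1)) (Suc k))"
        using step_i[OF wa wb dD hb1 hb2 b1 k LE P] Q by simp
    qed
    then obtain \<rho> Qc where Q: "\<rho> > 0" "amaj Qc \<rho>" "\<forall>z w. norm z \<le> \<rho> \<longrightarrow> norm w \<le> \<rho> \<longrightarrow> Qit p q n z w = ev Qc z w"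
      "lev wa wb Qc (wa*(n1*gs \<delta> m1 n) + wb*m1^n) (n1*gs \<delta> m1 n) (m1^n) (n1*gs \<delta> m1 n + wb*m1^(n-1)) (m2*m1^(n-1))"
      by auto
    have cQ: "coeffs2 (Qit p q n) = Qc" using coef[OF Q(1,2,3)] .
    have pw: "m1^n = m1 * m1^(n-1)" using n by (cases n) auto
    have yy: "m2*m1^(n-1) < m1^n" unfolding pw using m12 m1pos by simp
    note FG = final_geo[OF wa wb Q(4) yy]
    have LEn: "wa*(n1*gs \<delta> m1 n) + wb*m1^n < wb*\<delta>^n" by (rule LE_i[OF wa wb _ Kl n]) (use m1pos in simp)
    have xr: "real (n1*gs \<delta> m1 n) = \<gamma> * (\<Sum>k<n. real \<delta> ^ (n - 1 - k) * d ^ k)"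
      by (simp add: \<gamma>_def d_def gsr)
    have yr: "real (m1^n) = d^n" by (simp add: d_def)
    have x2r: "real (n1*gs \<delta> m1 n + wb*m1^(n-1)) = \<gamma> * (\<Sum>k<n. real \<delta> ^ (n - 1 - k) * d ^ k) - (\<gamma> - C) * d^(n-1)"
    proof -
      have "real (n1*gs \<delta> m1 n + wb*m1^(n-1)) = real (n1*gs \<delta> m1 n) + real wb * d^(n-1)"
        by (simp add: d_def)
      also have "\<dots> = \<gamma> * (\<Sum>k<n. real \<delta> ^ (n - 1 - k) * d ^ k) + (C - \<gamma>) * d^(n-1)"
        unfolding xr rwb by (simp add: C_def \<gamma>_def)
      finally show ?thesis by (simp add: algebra_simps)
    qed
    have y2r: "real (m2*m1^(n-1)) = D * d^(n-1)" by (simp add: D_def d_def)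
    have yint_lt: "real \<delta> ^ n > real (wa*(n1*gs \<delta> m1 n) + wb*m1^n) / real wb"
    proof -
      have "real (wa*(n1*gs \<delta> m1 n) + wb*m1^n) < real (wb*\<delta>^n)" using LEn by (simp only: of_nat_less_iff)
      then show ?thesis using wb by (simp add: field_simps)
    qed
    show "let \<gamma>n = \<gamma> * (\<Sum>k<n. real \<delta> ^ (n - 1 - k) * d ^ k);
          P = (\<gamma>n, d ^ n);
          Qv = (\<gamma>n - (\<gamma> - C) * d ^ (n - 1), D * d ^ (n - 1))
      in next_vertex (coeffs2 (Qit p q n)) P Qv \<and> slope P Qv = - 1 / l2
         \<and> real \<delta> ^ n > yint P Qv"
      unfolding Let_def cQ using FG yint_lt l2e xr yr x2r y2r by simp
  next
    fix n :: nat assume cond: "real \<delta> = T1 \<and> m2 > 0" and n: "n \<ge> 1"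
    have Ke: "wa*n1 + wb*m1 = wb*\<delta>"
    proof -
      have "real (wa*n1 + wb*m1) / real wb = real \<delta>" using cond T1e by simp
      then have "real (wa*n1 + wb*m1) = real \<delta> * real wb" using wb by (simp add: field_simps)
      then show ?thesis by (simp only: of_nat_mult[symmetric] of_nat_eq_iff) (simp add: mult.commute)
    qed
    have D0: "m2 > 0" using cond by simp
    have ex: "\<exists>\<rho> Qc. \<rho> > 0 \<and> amaj Qc \<rho> \<and> (\<forall>z w. norm z \<le> \<rho> \<longrightarrow> norm w \<le> \<rho> \<longrightarrow> Qit p q n z w = ev Qc z w)
      \<and> lev wa wb Qc ((\<lambda>n. wb*\<delta>^n) n) ((\<lambda>n. n1*gs \<delta> m1 n) n) ((\<lambda>n. m1^n) n)
          ((\<lambda>n. n2*gs \<delta> m2 n) n) ((\<lambda>n. m2^n) n)"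
    proof (rule EQ_gen[OF Rq(1,2) Rq3 EPn wa \<delta>_pos _ _ _ n])
      show "lev wa wb b ((\<lambda>n. wb*\<delta>^n) 1) ((\<lambda>n. n1*gs \<delta> m1 n) 1) ((\<lambda>n. m1^n) 1)
          ((\<lambda>n. n2*gs \<delta> m2 n) 1) ((\<lambda>n. m2^n) 1)"
        using levb Ke by (simp add: gs_def)
      show "\<And>n. n \<ge> 1 \<Longrightarrow> (\<lambda>n. wb*\<delta>^n) n > 0" using wb \<delta>_pos by simp
      fix k Pc Qc assume k: "k \<ge> 1" and P: "lev wa wb Pc (wa*\<delta>^k) (\<delta>^k) 0 (\<delta>^k) 0"
        and Q: "lev wa wb Qc ((\<lambda>n. wb*\<delta>^n) k) ((\<lambda>n. n1*gs \<delta> m1 n) k) ((\<lambda>n. m1^n) k)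
          ((\<lambda>n. n2*gs \<delta> m2 n) k) ((\<lambda>n. m2^n) k)"
      show "lev wa wb (cmp2 b Pc Qc) ((\<lambda>n. wb*\<delta>^n) (Suc k)) ((\<lambda>n. n1*gs \<delta> m1 n) (Suc k))
          ((\<lambda>n. m1^n) (Suc k)) ((\<lambda>n. n2*gs \<delta> m2 n) (Suc k)) ((\<lambda>n. m2^n) (Suc k))"
        using step_ii[OF wa wb D0 m1pos K2 hb1 hb2 hb3 b1 b2 Ke P] Q by simp
    qed
    then obtain \<rho> Qc where Q: "\<rho> > 0" "amaj Qc \<rho>" "\<forall>z w. norm z \<le> \<rho> \<longrightarrow> norm w \<le> \<rho> \<longrightarrow> Qit p q n z w = ev Qc z w"
      "lev wa wb Qc (wb*\<delta>^n) (n1*gs \<delta> m1 n) (m1^n) (n2*gs \<delta> m2 n) (m2^n)"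
      by auto
    have cQ: "coeffs2 (Qit p q n) = Qc" using coef[OF Q(1,2,3)] .
    have yy: "m2^n < m1^n" using m12 n by (simp add: power_strict_mono)
    note FG = final_geo[OF wa wb Q(4) yy]
    have xr: "real (n1*gs \<delta> m1 n) = \<gamma> * (\<Sum>k<n. real \<delta> ^ (n - 1 - k) * d ^ k)"
      by (simp add: \<gamma>_def d_def gsr)
    have yr: "real (m1^n) = d^n" by (simp add: d_def)
    have x2r: "real (n2*gs \<delta> m2 n) = (\<Sum>k<n. real \<delta> ^ (n - 1 - k) * D ^ k) * C"
      by (simp add: C_def D_def gsr)
    have y2r: "real (m2^n) = D^n" by (simp add: D_def)
    have yint_eq: "real (wb*\<delta>^n) / real wb = real \<delta> ^ n" using wb by simp
    show "let \<gamma>n = \<gamma> * (\<Sum>k<n. real \<delta> ^ (n - 1 - k) * d ^ k);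
          P = (\<gamma>n, d ^ n);
          Qv = ((\<Sum>k<n. real \<delta> ^ (n - 1 - k) * D ^ k) * C, D ^ n)
      in next_vertex (coeffs2 (Qit p q n)) P Qv \<and> slope P Qv = - 1 / l2
         \<and> real \<delta> ^ n = yint P Qv"
      unfolding Let_def cQ using FG yint_eq l2e xr yr x2r y2r by simp
  qed
qed


end
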